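(* Let $(c,\alpha,\beta,\phi)$ be a solution of the Rayleigh–Kuo equation $-\phi''+\alpha^{2}\phi-\frac{\beta-U''}{U-c}\phi=0$ on $(y_1,y_2)$ with $\phi(y_1)=\phi(y_2)=0$, where $\phi\in H^{2}(y_1,y_2)$. Then (i) $\langle L_{\alpha}\omega,\omega\rangle=(c-U_{\beta})\int_{y_{1}}^{y_{2}}\frac{\beta-U''}{|U-c|^{2}}|\phi|^{2}\,dy$, where $\omega=-\phi''+\alpha^{2}\phi$. (ii) If $(c,\alpha,\beta,\phi)$ is an unstable mode (i.e. $\operatorname{Im}c>0$), then $\langle L_{\alpha}\omega,\omega\rangle=0$. (iii) If $(c,\alpha,\beta,\phi)$ is a regular or non-resonant neutral limiting mode, then $\langle L_{\alpha}\omega,\omega\rangle=0$. If $(c,\alpha,\beta,\phi)$ is a singular neutral limiting mode, then $\langle L_{\alpha}\omega,\omega\rangle\leq 0$.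
   Context: Let $U\in C^{3}([y_1,y_2])$ be a non-constant shear flow in class $\mathcal{K}^{+}$: for each $\beta$ in the range of $U''$ there is $U_\beta$ in the range of $U$ such that $K_\beta(y)=\frac{\beta-U''(y)}{U(y)-U_\beta}$ is positive and bounded on $[y_1,y_2]$. Fix $\beta\in(\min U'',\max U'')$ and $\alpha>0$. On $Y=L^{2}_{1/K_\beta}(y_1,y_2)$ define the self-adjoint operator $L_{\alpha}=\frac{1}{K_{\beta}}-\left(-\frac{d^{2}}{dy^{2}}+\alpha^{2}\right)^{-1}$ (inverse taken with Dirichlet boundary conditions at $y_1,y_2$), so that $\langle L_\alpha\omega,\omega\rangle=\int_{y_1}^{y_2}\left(\frac{\omega}{K_\beta}-\psi\right)\bar\omega\,dy$ with $\psi=(-\frac{d^2}{dy^2}+\alpha^2)^{-1}\omega$. A neutral limiting mode $(c_s,\alpha_s,\beta,\phi_s)$ is one with $c_s\in\mathbb{R}$, $\alpha_s>0$, obtained as a limit of unstable modes $(c_k,\alpha_k,\beta,\phi_k)$ ($\operatorname{Im}c_k>0$, $\|\phi_k\|_{L^2}=1$) with $c_k\to c_s$, $\alpha_k\to\alpha_s$, $\phi_k\to\phi_s$ uniformly on compact subsets of $[y_1,y_2]\setminus\{U=c_s\}$, and $\phi_s$ solving $(U-c_s)(-\phi_s''+\alpha_s^2\phi_s)-(\beta-U'')\phi_s=0$ there. A neutral mode is called regular if $c=U_\beta$, singular if $c=U(y_1)$, $c=U(y_2)$, or $c$ is a critical value of $U$, and non-resonant if $c$ is outside the range of $U$. *)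

theory Defs
  imports "HOL-Analysis.Analysis"
begin

definition C3_on :: "real \<Rightarrow> real \<Rightarrow> (real \<Rightarrow> real) \<Rightarrow> (real \<Rightarrow> real) \<Rightarrow> (real \<Rightarrow> real) \<Rightarrow> (real \<Rightarrow> real) \<Rightarrow> bool" where
  "C3_on y1 y2 U U1 U2 U3 \<longleftrightarrow> y1 < y2 \<and>
     (\<forall>y\<in>{y1..y2}. (U has_real_derivative U1 y) (at y within {y1..y2}) \<and>
                   (U1 has_real_derivative U2 y) (at y within {y1..y2}) \<and>
                   (U2 has_real_derivative U3 y) (at y within {y1..y2})) \<and>
     continuous_on {y1..y2} U3"

definition Kuo_K :: "(real \<Rightarrow> real) \<Rightarrow> (real \<Rightarrow> real) \<Rightarrow> real \<Rightarrow> real \<Rightarrow> real \<Rightarrow> real \<Rightarrow> (real \<Rightarrow> real) \<Rightarrow> bool" where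
  "Kuo_K U U2 y1 y2 \<beta> Ub K \<longleftrightarrow> Ub \<in> U ` {y1..y2} \<and>
     (\<forall>y\<in>{y1..y2}. 0 < K y \<and> K y * (U y - Ub) = \<beta> - U2 y) \<and> bounded (K ` {y1..y2})"

definition classKplus :: "(real \<Rightarrow> real) \<Rightarrow> (real \<Rightarrow> real) \<Rightarrow> real \<Rightarrow> real \<Rightarrow> bool" where
  "classKplus U U2 y1 y2 \<longleftrightarrow> (\<forall>\<beta>\<in>U2 ` {y1..y2}. \<exists>Ub K. Kuo_K U U2 y1 y2 \<beta> Ub K)"

text \<open>f in H^2(a,b): f, f1 absolutely continuous with f1 = f', f2 = f'' (a.e.) and f2 in L^2(a,b).\<close>
definition H2_on :: "real \<Rightarrow> real \<Rightarrow> (real \<Rightarrow> complex) \<Rightarrow> (real \<Rightarrow> complex) \<Rightarrow> (real \<Rightarrow> complex) \<Rightarrow> bool" where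
  "H2_on a b f f1 f2 \<longleftrightarrow>
     set_borel_measurable lborel {a..b} f2 \<and>
     set_integrable lborel {a..b} (\<lambda>y. (cmod (f2 y))\<^sup>2) \<and>
     (\<forall>x\<in>{a..b}. f1 x = f1 a + (LINT t:{a..x}|lborel. f2 t)) \<and>
     (\<forall>x\<in>{a..b}. f x = f a + (LINT t:{a..x}|lborel. f1 t))"

definition rk_solution :: "(real \<Rightarrow> real) \<Rightarrow> (real \<Rightarrow> real) \<Rightarrow> real \<Rightarrow> real \<Rightarrow> complex \<Rightarrow> real \<Rightarrow> real
    \<Rightarrow> (real \<Rightarrow> complex) \<Rightarrow> (real \<Rightarrow> complex) \<Rightarrow> (real \<Rightarrow> complex) \<Rightarrow> bool" where
  "rk_solution U U2 y1 y2 c \<alpha> \<beta> \<phi> \<phi>1 \<phi>2 \<longleftrightarrow>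
     H2_on y1 y2 \<phi> \<phi>1 \<phi>2 \<and> \<phi> y1 = 0 \<and> \<phi> y2 = 0 \<and>
     (AE y in lborel. y \<in> {y1<..<y2} \<longrightarrow>
        - \<phi>2 y + of_real (\<alpha>\<^sup>2) * \<phi> y - of_real (\<beta> - U2 y) / (of_real (U y) - c) * \<phi> y = 0)"

definition vorticity :: "real \<Rightarrow> (real \<Rightarrow> complex) \<Rightarrow> (real \<Rightarrow> complex) \<Rightarrow> real \<Rightarrow> complex" where
  "vorticity \<alpha> \<phi> \<phi>2 = (\<lambda>y. - \<phi>2 y + of_real (\<alpha>\<^sup>2) * \<phi> y)"

text \<open>psi = (-d^2/dy^2 + alpha^2)^{-1} omega with Dirichlet boundary conditions
  (the unique H^2 solution, normalised to 0 outside [a,b]).\<close>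
definition dirichlet_inv :: "real \<Rightarrow> real \<Rightarrow> real \<Rightarrow> (real \<Rightarrow> complex) \<Rightarrow> real \<Rightarrow> complex" where
  "dirichlet_inv a b \<alpha> \<omega> = (THE \<psi>.
     (\<exists>\<psi>1 \<psi>2. H2_on a b \<psi> \<psi>1 \<psi>2 \<and> \<psi> a = 0 \<and> \<psi> b = 0 \<and>
        (AE y in lborel. y \<in> {a..b} \<longrightarrow> - \<psi>2 y + of_real (\<alpha>\<^sup>2) * \<psi> y = \<omega> y)) \<and>
     (\<forall>y. y \<notin> {a..b} \<longrightarrow> \<psi> y = 0))"

definition L_form :: "real \<Rightarrow> real \<Rightarrow> (real \<Rightarrow> real) \<Rightarrow> real \<Rightarrow> (real \<Rightarrow> complex) \<Rightarrow> complex" where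
  "L_form y1 y2 K \<alpha> \<omega> =
     (LINT y:{y1..y2}|lborel. (\<omega> y / of_real (K y) - dirichlet_inv y1 y2 \<alpha> \<omega> y) * cnj (\<omega> y))"

definition unstable_mode :: "(real \<Rightarrow> real) \<Rightarrow> (real \<Rightarrow> real) \<Rightarrow> real \<Rightarrow> real \<Rightarrow> complex \<Rightarrow> real \<Rightarrow> real
    \<Rightarrow> (real \<Rightarrow> complex) \<Rightarrow> bool" where
  "unstable_mode U U2 y1 y2 c \<alpha> \<beta> \<phi> \<longleftrightarrow> 0 < Im c \<and> 0 < \<alpha> \<and>
     (\<exists>\<phi>1 \<phi>2. rk_solution U U2 y1 y2 c \<alpha> \<beta> \<phi> \<phi>1 \<phi>2)"

definition neutral_limiting_mode :: "(real \<Rightarrow> real) \<Rightarrow> (real \<Rightarrow> real) \<Rightarrow> real \<Rightarrow> real \<Rightarrow> complex \<Rightarrow> real \<Rightarrow> real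
    \<Rightarrow> (real \<Rightarrow> complex) \<Rightarrow> bool" where
  "neutral_limiting_mode U U2 y1 y2 c \<alpha> \<beta> \<phi> \<longleftrightarrow> Im c = 0 \<and> 0 < \<alpha> \<and>
     (\<exists>ck \<alpha>k \<phi>k.
        (\<forall>k. unstable_mode U U2 y1 y2 (ck k) (\<alpha>k k) \<beta> (\<phi>k k) \<and>
             (LINT y:{y1..y2}|lborel. (cmod (\<phi>k k y))\<^sup>2) = 1) \<and>
        ck \<longlonglongrightarrow> c \<and> \<alpha>k \<longlonglongrightarrow> \<alpha> \<and>
        (\<forall>S. compact S \<and> S \<subseteq> {y1..y2} - {y. of_real (U y) = c} \<longrightarrow>
             uniform_limit S \<phi>k \<phi> sequentially)) \<and>
     (\<exists>\<phi>1 \<phi>2. \<forall>y\<in>{y1..y2} - {y. of_real (U y) = c}.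
        (\<phi> has_vector_derivative \<phi>1 y) (at y within {y1..y2}) \<and>
        (\<phi>1 has_vector_derivative \<phi>2 y) (at y within {y1..y2}) \<and>
        (of_real (U y) - c) * (- \<phi>2 y + of_real (\<alpha>\<^sup>2) * \<phi> y) - of_real (\<beta> - U2 y) * \<phi> y = 0)"

definition regular_mode :: "complex \<Rightarrow> real \<Rightarrow> bool" where
  "regular_mode c Ub \<longleftrightarrow> c = of_real Ub"

definition singular_mode :: "(real \<Rightarrow> real) \<Rightarrow> (real \<Rightarrow> real) \<Rightarrow> real \<Rightarrow> real \<Rightarrow> complex \<Rightarrow> bool" where
  "singular_mode U U1 y1 y2 c \<longleftrightarrow> c = of_real (U y1) \<or> c = of_real (U y2) \<or>
     (\<exists>y\<in>{y1..y2}. U1 y = 0 \<and> c = of_real (U y))"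

definition nonresonant_mode :: "(real \<Rightarrow> real) \<Rightarrow> real \<Rightarrow> real \<Rightarrow> complex \<Rightarrow> bool" where
  "nonresonant_mode U y1 y2 c \<longleftrightarrow> c \<notin> of_real ` U ` {y1..y2}"

end

theory Submission
  imports Defs
begin


lemma cont_meas_restrict:
  fixes f :: "real \<Rightarrow> 'b::real_normed_vector"
  assumes "continuous_on A f"
  shows "f \<in> borel_measurable (restrict_space lborel A)"
proof -
  have "f \<in> borel_measurable (restrict_space borel A)"
    by (rule borel_measurable_continuous_on_restrict[OF assms])
  moreover have "sets (restrict_space lborel A) = sets (restrict_space borel A)"
    by (simp add: sets_restrict_space)
  ultimately show ?thesis using measurable_cong_sets[OF _ refl] by blast
qed

lemma sbm_iff:
  fixes f :: "real \<Rightarrow> 'b::real_normed_vector"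
  assumes "A \<in> sets borel"
  shows "set_borel_measurable lborel A f \<longleftrightarrow> f \<in> borel_measurable (restrict_space lborel A)"
  using assms by (simp add: set_borel_measurable_def borel_measurable_restrict_space_iff)

lemma LINT_cong_AE_restrict:
  fixes f g :: "real \<Rightarrow> 'b::{banach,second_countable_topology}"
  assumes A: "A \<in> sets borel" and f: "f \<in> borel_measurable (restrict_space lborel A)"
    and g: "g \<in> borel_measurable (restrict_space lborel A)"
    and ae: "AE x in lborel. x \<in> A \<longrightarrow> f x = g x"
  shows "(LINT x:A|lborel. f x) = (LINT x:A|lborel. g x)"
  unfolding set_lebesgue_integral_def
proof (rule integral_cong_AE)
  show "(\<lambda>x. indicator A x *\<^sub>R f x) \<in> borel_measurable lborel"
    using f A by (simp add: borel_measurable_restrict_space_iff)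
  show "(\<lambda>x. indicator A x *\<^sub>R g x) \<in> borel_measurable lborel"
    using g A by (simp add: borel_measurable_restrict_space_iff)
  show "AE x in lborel. indicator A x *\<^sub>R f x = indicator A x *\<^sub>R g x"
    using ae by eventually_elim (simp split: split_indicator)
qed

lemma set_integrable_Icc_const:
  "set_integrable lborel {a..b::real} (\<lambda>_. c::real)"
  unfolding set_integrable_def
  by (rule borel_integrable_compact) (auto intro: continuous_intros)

lemma L2_imp_L1:
  fixes f :: "real \<Rightarrow> complex"
  assumes m: "set_borel_measurable lborel {a..b} f"
    and sq: "set_integrable lborel {a..b} (\<lambda>y. (cmod (f y))\<^sup>2)"
  shows "set_integrable lborel {a..b} f"
proof (rule set_integrable_bound[OF _ m])
  show "set_integrable lborel {a..b} (\<lambda>y. 1 + (cmod (f y))\<^sup>2)"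
    using Bochner_Integration.integrable_add[OF set_integrable_Icc_const[of a b 1, unfolded set_integrable_def] sq[unfolded set_integrable_def]]
    unfolding set_integrable_def by (simp add: distrib_left)
  show "AE x in lborel. x \<in> {a..b} \<longrightarrow> norm (f x) \<le> norm (1 + (cmod (f x))\<^sup>2)"
  proof (rule AE_I2, rule impI)
    fix x
    have "0 \<le> (cmod (f x) - 1)\<^sup>2" by simp
    then have "2 * cmod (f x) \<le> 1 + (cmod (f x))\<^sup>2" by (simp add: power2_diff)
    moreover have "0 \<le> cmod (f x)" by simp
    ultimately have "cmod (f x) \<le> 1 + (cmod (f x))\<^sup>2" by linarith
    then show "norm (f x) \<le> norm (1 + (cmod (f x))\<^sup>2)" by simp
  qed
qed

lemma int_rep_deriv:
  fixes f f1 :: "real \<Rightarrow> complex"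
  assumes ab: "a \<le> b" and c1: "continuous_on {a..b} f1"
    and rep: "\<forall>x\<in>{a..b}. f x = f a + (LINT t:{a..x}|lborel. f1 t)"
  shows "\<forall>x\<in>{a..b}. (f has_vector_derivative f1 x) (at x within {a..b})"
proof
  fix x assume x: "x \<in> {a..b}"
  have eq: "\<forall>u\<in>{a..b}. f u = f a + integral {a..u} f1"
  proof
    fix u assume u: "u \<in> {a..b}"
    have "continuous_on {a..u} f1" by (rule continuous_on_subset[OF c1]) (use u in auto)
    then have "set_integrable lborel {a..u} f1"
      unfolding set_integrable_def by (rule borel_integrable_compact[rotated]) auto
    then have "(LINT t:{a..u}|lborel. f1 t) = integral {a..u} f1"
      by (rule set_borel_integral_eq_integral)
    moreover have "f u = f a + (LINT t:{a..u}|lborel. f1 t)" using rep u by blast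
    ultimately show "f u = f a + integral {a..u} f1" by simp
  qed
  have D: "((\<lambda>u. f a + integral {a..u} f1) has_vector_derivative f1 x) (at x within {a..b})"
    using integral_has_vector_derivative[OF c1 x]
    by (auto intro!: derivative_eq_intros)
  show "(f has_vector_derivative f1 x) (at x within {a..b})"
    by (rule has_vector_derivative_transform[where f="\<lambda>u. f a + integral {a..u} f1" and g=f, OF x _ D]) (use eq in blast)
qed

lemma H2_facts:
  fixes f f1 f2 :: "real \<Rightarrow> complex"
  assumes ab: "a \<le> b" and H: "H2_on a b f f1 f2"
  shows "set_integrable lborel {a..b} f2" "continuous_on {a..b} f1"
    "\<forall>x\<in>{a..b}. (f has_vector_derivative f1 x) (at x within {a..b})"
    "continuous_on {a..b} f"
proof -
  show i2: "set_integrable lborel {a..b} f2"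
    using H unfolding H2_on_def by (intro L2_imp_L1) auto
  have eq: "\<forall>u\<in>{a..b}. f1 u = f1 a + integral {a..u} f2"
  proof
    fix u assume u: "u \<in> {a..b}"
    have "set_integrable lborel {a..u} f2"
      by (rule set_integrable_subset[OF i2]) (use u in auto)
    then have "(LINT t:{a..u}|lborel. f2 t) = integral {a..u} f2"
      by (rule set_borel_integral_eq_integral)
    moreover have "f1 u = f1 a + (LINT t:{a..u}|lborel. f2 t)" using H u unfolding H2_on_def by blast
    ultimately show "f1 u = f1 a + integral {a..u} f2" by simp
  qed
  have "f2 integrable_on {a..b}" using set_borel_integral_eq_integral(1)[OF i2] .
  then have "continuous_on {a..b} (\<lambda>u. f1 a + integral {a..u} f2)"
    by (intro continuous_on_add continuous_on_const indefinite_integral_continuous_1)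
  then show c1: "continuous_on {a..b} f1"
    by (rule continuous_on_eq) (use eq in metis)
  show d: "\<forall>x\<in>{a..b}. (f has_vector_derivative f1 x) (at x within {a..b})"
    using int_rep_deriv[OF ab c1] H unfolding H2_on_def by blast
  show "continuous_on {a..b} f"
    unfolding continuous_on_eq_continuous_within
  proof
    fix x assume x: "x \<in> {a..b}"
    show "continuous (at x within {a..b}) f"
      using has_vector_derivative_continuous[OF d[rule_format, OF x]] .
  qed
qed

lemma H2_deriv2:
  fixes f1 f2 g :: "real \<Rightarrow> complex"
  assumes ab: "a \<le> b" and m: "set_borel_measurable lborel {a..b} f2"
    and rep: "\<forall>x\<in>{a..b}. f1 x = f1 a + (LINT t:{a..x}|lborel. f2 t)"
    and cg: "continuous_on {a..b} g"
    and ae: "AE x in lborel. x \<in> {a..b} \<longrightarrow> f2 x = g x"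
  shows "\<forall>x\<in>{a..b}. (f1 has_vector_derivative g x) (at x within {a..b})"
proof (rule int_rep_deriv[OF ab cg])
  show "\<forall>x\<in>{a..b}. f1 x = f1 a + (LINT t:{a..x}|lborel. g t)"
  proof
    fix x assume x: "x \<in> {a..b}"
    have m2: "f2 \<in> borel_measurable (restrict_space lborel {a..b})"
      using m by (simp add: sbm_iff)
    have "(LINT t:{a..x}|lborel. f2 t) = (LINT t:{a..x}|lborel. g t)"
    proof (rule LINT_cong_AE_restrict)
      show "f2 \<in> borel_measurable (restrict_space lborel {a..x})"
        by (rule measurable_restrict_mono[OF m2]) (use x in auto)
      show "g \<in> borel_measurable (restrict_space lborel {a..x})"
        by (rule cont_meas_restrict, rule continuous_on_subset[OF cg]) (use x in auto)
      show "AE t in lborel. t \<in> {a..x} \<longrightarrow> f2 t = g t"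
        using ae by eventually_elim (use x in auto)
    qed auto
    moreover have "f1 x = f1 a + (LINT t:{a..x}|lborel. f2 t)" using rep x by blast
    ultimately show "f1 x = f1 a + (LINT t:{a..x}|lborel. g t)" by simp
  qed
qed

lemma energy:
  fixes f f1 g :: "real \<Rightarrow> complex"
  assumes ab: "a \<le> b"
    and d1: "\<forall>x\<in>{a..b}. (f has_vector_derivative f1 x) (at x within {a..b})"
    and d2: "\<forall>x\<in>{a..b}. (f1 has_vector_derivative g x) (at x within {a..b})"
    and fa: "f a = 0" and fb: "f b = 0"
  shows "((\<lambda>x. f1 x * cnj (f1 x) + g x * cnj (f x)) has_integral 0) {a..b}"
proof -
  have D: "\<And>x. x \<in> {a..b} \<Longrightarrow> ((\<lambda>x. f1 x * cnj (f x)) has_vector_derivative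
           (f1 x * cnj (f1 x) + g x * cnj (f x))) (at x within {a..b})"
    using has_vector_derivative_mult[OF d2[rule_format] has_vector_derivative_cnj[OF d1[rule_format]]] .
  have "((\<lambda>x. f1 x * cnj (f1 x) + g x * cnj (f x)) has_integral (f1 b * cnj (f b) - f1 a * cnj (f a))) {a..b}"
    by (rule fundamental_theorem_of_calculus[OF ab D])
  then show ?thesis by (simp only: fa fb complex_cnj_zero mult_zero_right diff_zero)
qed



lemma vd_cont:
  fixes f :: "real \<Rightarrow> 'a::real_normed_vector"
  assumes "\<forall>x\<in>S. (f has_vector_derivative f' x) (at x within S)"
  shows "continuous_on S f"
  unfolding continuous_on_eq_continuous_within
proof
  fix x assume x: "x \<in> S"
  show "continuous (at x within S) f"
    using has_vector_derivative_continuous[OF assms[rule_format, OF x]] .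
qed

lemma cmod_sq_eq: "z * cnj z = complex_of_real ((cmod z)\<^sup>2)"
  by (rule complex_norm_square[symmetric])

lemma dirichlet_zero:
  fixes f f1 :: "real \<Rightarrow> complex"
  assumes ab: "a < b" and al: "\<alpha> \<noteq> 0"
    and d1: "\<forall>x\<in>{a..b}. (f has_vector_derivative f1 x) (at x within {a..b})"
    and d2: "\<forall>x\<in>{a..b}. (f1 has_vector_derivative (of_real (\<alpha>\<^sup>2) * f x)) (at x within {a..b})"
    and fa: "f a = 0" and fb: "f b = 0"
  shows "\<forall>x\<in>{a..b}. f x = 0"
proof -
  define h where "h x = (cmod (f1 x))\<^sup>2 + \<alpha>\<^sup>2 * (cmod (f x))\<^sup>2" for x
  have E: "((\<lambda>x. f1 x * cnj (f1 x) + of_real (\<alpha>\<^sup>2) * f x * cnj (f x)) has_integral 0) {a..b}"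
    using energy[OF less_imp_le[OF ab] d1 d2 fa fb] by (simp only: mult.assoc)
  have "(\<lambda>x. f1 x * cnj (f1 x) + of_real (\<alpha>\<^sup>2) * f x * cnj (f x)) = (\<lambda>x. complex_of_real (h x))"
    by (simp only: h_def of_real_add of_real_mult mult.assoc cmod_sq_eq)
  with E have "((\<lambda>x. complex_of_real (h x)) has_integral 0) {a..b}" by simp
  from has_integral_linear[OF this bounded_linear_Re]
  have H: "(h has_integral 0) (cbox a b)" by (simp add: o_def)
  have cf: "continuous_on {a..b} f" by (rule vd_cont[OF d1])
  have cf1: "continuous_on {a..b} f1" by (rule vd_cont[OF d2])
  have ch: "continuous_on (cbox a b) h"
    unfolding h_def cbox_interval by (intro continuous_intros cf cf1)
  show ?thesis
  proof
    fix x assume x: "x \<in> {a..b}"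
    have "h x = 0"
    proof (rule has_integral_0_cbox_imp_0[OF ch _ H])
      show "box a b \<noteq> {}" using ab by simp
      show "x \<in> cbox a b" using x by simp
      fix y show "0 \<le> h y" by (simp add: h_def)
    qed
    moreover have "0 \<le> (cmod (f1 x))\<^sup>2" "0 \<le> \<alpha>\<^sup>2 * (cmod (f x))\<^sup>2" by simp_all
    ultimately have "\<alpha>\<^sup>2 * (cmod (f x))\<^sup>2 = 0" unfolding h_def by linarith
    then show "f x = 0" using al by simp
  qed
qed

lemma dirichlet_inv_eq:
  fixes \<phi> \<phi>1 \<phi>2 :: "real \<Rightarrow> complex"
  assumes ab: "a < b" and al: "\<alpha> \<noteq> 0" and H: "H2_on a b \<phi> \<phi>1 \<phi>2"
    and pa: "\<phi> a = 0" and pb: "\<phi> b = 0"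
  shows "\<forall>y\<in>{a..b}. dirichlet_inv a b \<alpha> (vorticity \<alpha> \<phi> \<phi>2) y = \<phi> y"
proof -
  define \<omega> where "\<omega> = vorticity \<alpha> \<phi> \<phi>2"
  define \<psi>0 where "\<psi>0 y = (if y \<in> {a..b} then \<phi> y else 0)" for y
  define P where "P \<psi> \<longleftrightarrow> (\<exists>\<psi>1 \<psi>2. H2_on a b \<psi> \<psi>1 \<psi>2 \<and> \<psi> a = 0 \<and> \<psi> b = 0 \<and>
        (AE y in lborel. y \<in> {a..b} \<longrightarrow> - \<psi>2 y + of_real (\<alpha>\<^sup>2) * \<psi> y = \<omega> y)) \<and>
     (\<forall>y. y \<notin> {a..b} \<longrightarrow> \<psi> y = 0)" for \<psi>
  have Hfacts: "set_integrable lborel {a..b} \<phi>2" "continuous_on {a..b} \<phi>1"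
    "\<forall>x\<in>{a..b}. (\<phi> has_vector_derivative \<phi>1 x) (at x within {a..b})"
    "continuous_on {a..b} \<phi>" by (rule H2_facts[OF less_imp_le[OF ab] H])+
  have P0: "P \<psi>0"
    unfolding P_def
  proof (intro conjI exI allI impI)
    show "H2_on a b \<psi>0 \<phi>1 \<phi>2"
      unfolding H2_on_def
    proof (intro conjI)
      show "set_borel_measurable lborel {a..b} \<phi>2" "set_integrable lborel {a..b} (\<lambda>y. (cmod (\<phi>2 y))\<^sup>2)"
        "\<forall>x\<in>{a..b}. \<phi>1 x = \<phi>1 a + (LINT t:{a..x}|lborel. \<phi>2 t)"
        using H unfolding H2_on_def by blast+
      show "\<forall>x\<in>{a..b}. \<psi>0 x = \<psi>0 a + (LINT t:{a..x}|lborel. \<phi>1 t)"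
      proof
        fix x assume x: "x \<in> {a..b}"
        have "\<psi>0 x = \<phi> x" "\<psi>0 a = \<phi> a" using x ab by (simp_all add: \<psi>0_def)
        moreover have "\<phi> x = \<phi> a + (LINT t:{a..x}|lborel. \<phi>1 t)" using H x unfolding H2_on_def by blast
        ultimately show "\<psi>0 x = \<psi>0 a + (LINT t:{a..x}|lborel. \<phi>1 t)" by simp
      qed
    qed
    show "\<psi>0 a = 0" "\<psi>0 b = 0" using pa pb ab by (auto simp: \<psi>0_def)
    show "AE y in lborel. y \<in> {a..b} \<longrightarrow> - \<phi>2 y + of_real (\<alpha>\<^sup>2) * \<psi>0 y = \<omega> y"
      by (rule AE_I2) (simp add: \<psi>0_def \<omega>_def vorticity_def)
    show "\<And>y. y \<notin> {a..b} \<Longrightarrow> \<psi>0 y = 0" by (auto simp: \<psi>0_def)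
  qed
  have uniq: "\<psi> = \<psi>0" if P\<psi>: "P \<psi>" for \<psi>
  proof
    fix y
    obtain \<psi>1 \<psi>2 where Hp: "H2_on a b \<psi> \<psi>1 \<psi>2" and za: "\<psi> a = 0" and zb: "\<psi> b = 0"
      and ae: "AE y in lborel. y \<in> {a..b} \<longrightarrow> - \<psi>2 y + of_real (\<alpha>\<^sup>2) * \<psi> y = \<omega> y"
      and out: "\<forall>y. y \<notin> {a..b} \<longrightarrow> \<psi> y = 0"
      using P\<psi> unfolding P_def by blast
    have Pfacts: "set_integrable lborel {a..b} \<psi>2" "continuous_on {a..b} \<psi>1"
      "\<forall>x\<in>{a..b}. (\<psi> has_vector_derivative \<psi>1 x) (at x within {a..b})"
      "continuous_on {a..b} \<psi>" by (rule H2_facts[OF less_imp_le[OF ab] Hp])+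
    have D1: "\<forall>x\<in>{a..b}. ((\<lambda>x. \<psi> x - \<phi> x) has_vector_derivative (\<psi>1 x - \<phi>1 x)) (at x within {a..b})"
      using Pfacts(3) Hfacts(3) by (auto intro!: derivative_eq_intros)
    have D2: "\<forall>x\<in>{a..b}. ((\<lambda>x. \<psi>1 x - \<phi>1 x) has_vector_derivative (of_real (\<alpha>\<^sup>2) * (\<psi> x - \<phi> x))) (at x within {a..b})"
    proof (rule H2_deriv2[of a b "\<lambda>x. \<psi>2 x - \<phi>2 x" "\<lambda>x. \<psi>1 x - \<phi>1 x"])
      show "a \<le> b" using ab by simp
      have m1: "\<psi>2 \<in> borel_measurable (restrict_space lborel {a..b})"
        using Hp unfolding H2_on_def by (simp add: sbm_iff)
      have m2: "\<phi>2 \<in> borel_measurable (restrict_space lborel {a..b})"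
        using H unfolding H2_on_def by (simp add: sbm_iff)
      show "set_borel_measurable lborel {a..b} (\<lambda>x. \<psi>2 x - \<phi>2 x)"
        using m1 m2 by (simp add: sbm_iff)
      show "\<forall>x\<in>{a..b}. \<psi>1 x - \<phi>1 x = \<psi>1 a - \<phi>1 a + (LINT t:{a..x}|lborel. \<psi>2 t - \<phi>2 t)"
      proof
        fix x assume x: "x \<in> {a..b}"
        have i1: "set_integrable lborel {a..x} \<psi>2"
          by (rule set_integrable_subset[OF Pfacts(1)]) (use x in auto)
        have i2: "set_integrable lborel {a..x} \<phi>2"
          by (rule set_integrable_subset[OF Hfacts(1)]) (use x in auto)
        have e1: "\<psi>1 x = \<psi>1 a + (LINT t:{a..x}|lborel. \<psi>2 t)" using Hp x unfolding H2_on_def by blast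
        have e2: "\<phi>1 x = \<phi>1 a + (LINT t:{a..x}|lborel. \<phi>2 t)" using H x unfolding H2_on_def by blast
        have "(LINT t:{a..x}|lborel. \<psi>2 t - \<phi>2 t) = (LINT t:{a..x}|lborel. \<psi>2 t) - (LINT t:{a..x}|lborel. \<phi>2 t)"
          by (rule set_integral_diff(2)[OF i1 i2])
        then show "\<psi>1 x - \<phi>1 x = \<psi>1 a - \<phi>1 a + (LINT t:{a..x}|lborel. \<psi>2 t - \<phi>2 t)"
          using e1 e2 by (simp add: algebra_simps)
      qed
      show "continuous_on {a..b} (\<lambda>x. of_real (\<alpha>\<^sup>2) * (\<psi> x - \<phi> x))"
        using Pfacts(4) Hfacts(4) by (intro continuous_intros)
      show "AE x in lborel. x \<in> {a..b} \<longrightarrow> \<psi>2 x - \<phi>2 x = of_real (\<alpha>\<^sup>2) * (\<psi> x - \<phi> x)"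
        using ae by eventually_elim (auto simp: \<omega>_def vorticity_def algebra_simps)
    qed
    have Z: "\<forall>x\<in>{a..b}. \<psi> x - \<phi> x = 0"
      by (rule dirichlet_zero[OF ab al D1 D2]) (use za zb pa pb in auto)
    show "\<psi> y = \<psi>0 y"
      using Z out by (cases "y \<in> {a..b}") (auto simp: \<psi>0_def)
  qed
  have T: "(THE \<psi>. P \<psi>) = \<psi>0" by (rule the_equality[of P, OF P0 uniq])
  have "dirichlet_inv a b \<alpha> \<omega> = (THE \<psi>. P \<psi>)"
    by (simp only: dirichlet_inv_def P_def)
  then have "dirichlet_inv a b \<alpha> \<omega> = \<psi>0" using T by simp
  then show ?thesis by (simp add: \<psi>0_def \<omega>_def)
qed



lemma deriv_zero_limpt:
  fixes g :: "real \<Rightarrow> real"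
  assumes d: "(g has_real_derivative d) (at z within S)" and lp: "z islimpt T" and TS: "T \<subseteq> S"
    and gT: "\<forall>x\<in>T. g x = g z"
  shows "d = 0"
proof -
  have "((\<lambda>y. (g y - g z) / (y - z)) \<longlongrightarrow> d) (at z within S)" using d has_field_derivative_iff by blast
  then have L: "((\<lambda>y. (g y - g z) / (y - z)) \<longlongrightarrow> d) (at z within T)"
    by (rule tendsto_mono[OF at_le[OF TS]])
  have "eventually (\<lambda>y. (g y - g z) / (y - z) = 0) (at z within T)"
    unfolding eventually_at_filter using gT by (auto intro!: always_eventually)
  then have L0: "((\<lambda>y. (g y - g z) / (y - z)) \<longlongrightarrow> 0) (at z within T)" by (rule tendsto_eventually)
  have ne: "at z within T \<noteq> bot" using lp trivial_limit_within by blast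
  show "d = 0" by (rule tendsto_unique[OF ne L L0])
qed

lemma within_to_at:
  fixes f :: "real \<Rightarrow> real"
  assumes "(f has_real_derivative D) (at x within {a..b})" "a < x" "x < b"
  shows "(f has_real_derivative D) (at x)"
  using assms(1) by (simp add: at_within_Icc_at[OF assms(2,3)])

lemma rderiv_cont:
  fixes f :: "real \<Rightarrow> real"
  assumes "\<forall>x\<in>S. (f has_real_derivative f' x) (at x within S)"
  shows "continuous_on S f"
  by (rule vd_cont) (use assms in \<open>simp add: has_real_derivative_iff_has_vector_derivative\<close>)

lemma gronwall_zero:
  fixes E E' :: "real \<Rightarrow> real"
  assumes az: "a \<le> z" and zb: "z \<le> b" and C: "0 \<le> C"
    and dE: "\<And>t. a < t \<Longrightarrow> t < b \<Longrightarrow> (E has_real_derivative E' t) (at t)"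
    and cE: "continuous_on {a..b} E"
    and bnd: "\<And>t. a < t \<Longrightarrow> t < b \<Longrightarrow> \<bar>E' t\<bar> \<le> C * E t"
    and Ez: "E z = 0" and nn: "\<And>t. t \<in> {a..b} \<Longrightarrow> 0 \<le> E t"
  shows "\<forall>t\<in>{a..b}. E t = 0"
proof
  fix t assume t: "t \<in> {a..b}"
  have "E t \<le> 0"
  proof (cases "z \<le> t")
    case True
    define g where "g s = - (E s * exp (- C * s))" for s
    have "g z \<le> g t"
    proof (rule DERIV_nonneg_imp_increasing_open[OF True])
      fix s assume s: "z < s" "s < t"
      then have s': "a < s" "s < b" using az t by auto
      have "DERIV g s :> - (E' s * exp (- C * s) + E s * (exp (- C * s) * (- C)))"
        unfolding g_def by (auto intro!: derivative_eq_intros dE[OF s'])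
      moreover have "0 \<le> - (E' s * exp (- C * s) + E s * (exp (- C * s) * (- C)))"
      proof -
        have "E' s \<le> C * E s" using bnd[OF s'] by linarith
        then have "E' s * exp (- C * s) \<le> C * E s * exp (- C * s)" by (simp add: mult_right_mono)
        then show ?thesis by (simp add: algebra_simps)
      qed
      ultimately show "\<exists>y. DERIV g s :> y \<and> 0 \<le> y" by blast
    next
      have "continuous_on {z..t} E" by (rule continuous_on_subset[OF cE]) (use az t in auto)
      then show "continuous_on {z..t} g" unfolding g_def by (intro continuous_intros)
    qed
    then have "E t * exp (- C * t) \<le> 0" using Ez by (simp add: g_def)
    then show "E t \<le> 0" by (simp add: mult_le_0_iff)
  next
    case False
    define g where "g s = E s * exp (C * s)" for s
    have "g t \<le> g z"
    proof (rule DERIV_nonneg_imp_increasing_open[of t z g])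
      show "t \<le> z" using False by simp
      fix s assume s: "t < s" "s < z"
      then have s': "a < s" "s < b" using zb t by auto
      have "DERIV g s :> E' s * exp (C * s) + E s * (exp (C * s) * C)"
        unfolding g_def by (auto intro!: derivative_eq_intros dE[OF s'])
      moreover have "0 \<le> E' s * exp (C * s) + E s * (exp (C * s) * C)"
      proof -
        have "- E' s \<le> C * E s" using bnd[OF s'] by linarith
        then have "- E' s * exp (C * s) \<le> C * E s * exp (C * s)" by (rule mult_right_mono) simp
        then show ?thesis by (simp add: algebra_simps)
      qed
      ultimately show "\<exists>y. DERIV g s :> y \<and> 0 \<le> y" by blast
    next
      have "continuous_on {t..z} E" by (rule continuous_on_subset[OF cE]) (use zb t in auto)
      then show "continuous_on {t..z} g" unfolding g_def by (intro continuous_intros)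
    qed
    then have "E t * exp (C * t) \<le> 0" using Ez by (simp add: g_def)
    then show "E t \<le> 0" by (simp add: mult_le_0_iff)
  qed
  with nn[OF t] show "E t = 0" by simp
qed

lemma two_pq_bound:
  fixes p q k B :: real
  assumes "\<bar>k\<bar> \<le> B"
  shows "\<bar>2 * q * p * (1 - k)\<bar> \<le> (1 + B) * (p\<^sup>2 + q\<^sup>2)"
proof -
  have "0 \<le> (\<bar>p\<bar> - \<bar>q\<bar>)\<^sup>2" by simp
  then have pq: "2 * \<bar>p\<bar> * \<bar>q\<bar> \<le> p\<^sup>2 + q\<^sup>2" by (simp add: power2_diff)
  have k: "\<bar>1 - k\<bar> \<le> 1 + B" using assms by linarith
  have "\<bar>2 * q * p * (1 - k)\<bar> = (2 * \<bar>p\<bar> * \<bar>q\<bar>) * \<bar>1 - k\<bar>" by (simp add: abs_mult)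
  also have "\<dots> \<le> (p\<^sup>2 + q\<^sup>2) * (1 + B)"
    by (rule mult_mono[OF pq k]) auto
  finally show ?thesis by (simp add: mult.commute)
qed

lemma zeros_finite:
  fixes U U1 U2 U3 K :: "real \<Rightarrow> real"
  assumes C3: "C3_on y1 y2 U U1 U2 U3" and nc: "\<exists>y\<in>{y1..y2}. U y \<noteq> U y1"
    and KK: "Kuo_K U U2 y1 y2 \<beta> Ub K"
  shows "finite {y\<in>{y1..y2}. U y = Ub}"
proof -
  define Z where "Z = {y\<in>{y1..y2}. U y = Ub}"
  have y12: "y1 < y2" using C3 unfolding C3_on_def by blast
  have dU: "\<forall>y\<in>{y1..y2}. (U has_real_derivative U1 y) (at y within {y1..y2})"
    and dU1: "\<forall>y\<in>{y1..y2}. (U1 has_real_derivative U2 y) (at y within {y1..y2})"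
    using C3 unfolding C3_on_def by blast+
  have Kpos: "\<forall>y\<in>{y1..y2}. 0 < K y \<and> K y * (U y - Ub) = \<beta> - U2 y"
    and Kb: "bounded (K ` {y1..y2})" using KK unfolding Kuo_K_def by blast+
  have cU: "continuous_on {y1..y2} U" by (rule rderiv_cont[OF dU])
  have cU1: "continuous_on {y1..y2} U1" by (rule rderiv_cont[OF dU1])
  have clZ: "closed Z" unfolding Z_def by (rule continuous_closed_preimage_constant[OF cU closed_atLeastAtMost])
  have "\<not> z islimpt Z" if z: "z \<in> {y1..y2}" for z
  proof
    assume lp: "z islimpt Z"
    have zZ: "z \<in> Z" using clZ lp closed_limpt by blast
    then have Uz: "U z = Ub" by (simp add: Z_def)
    have U1z: "U1 z = 0"
      by (rule deriv_zero_limpt[OF dU[rule_format, OF z] lp]) (use Uz in \<open>auto simp: Z_def\<close>)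
    define Z1 where "Z1 = {w\<in>{y1..y2}. U1 w = 0}"
    have lp1: "z islimpt Z1"
      unfolding islimpt_approachable
    proof (intro allI impI)
      fix e :: real assume e: "0 < e"
      obtain x where xZ: "x \<in> Z" and xz: "x \<noteq> z" and dx: "dist x z < e"
        using lp e unfolding islimpt_approachable by blast
      define lo where "lo = min x z"
      define hi where "hi = max x z"
      have lohi: "lo < hi" using xz by (simp add: lo_def hi_def)
      have lo1: "y1 \<le> lo" and hi2: "hi \<le> y2" using xZ z by (auto simp: Z_def lo_def hi_def)
      have Ulh: "U lo = U hi" using xZ Uz by (auto simp: Z_def lo_def hi_def)
      have clh: "continuous_on {lo..hi} U" by (rule continuous_on_subset[OF cU]) (use lo1 hi2 in auto)
      have dlh: "\<And>w. lo < w \<Longrightarrow> w < hi \<Longrightarrow> (U has_derivative (*) (U1 w)) (at w)"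
      proof -
        fix w assume w: "lo < w" "w < hi"
        then have w': "y1 < w" "w < y2" "w \<in> {y1..y2}" using lo1 hi2 by auto
        have "(U has_real_derivative U1 w) (at w)"
          by (rule within_to_at[OF dU[rule_format, OF w'(3)] w'(1,2)])
        then show "(U has_derivative (*) (U1 w)) (at w)" by (simp add: has_field_derivative_def)
      qed
      obtain w where w: "lo < w" "w < hi" and w0: "(*) (U1 w) = (\<lambda>v. 0)"
        using Rolle_deriv[OF lohi Ulh clh dlh] by blast
      have "U1 w = 0" using fun_cong[OF w0, of 1] by simp
      moreover have "w \<in> {y1..y2}" using w lo1 hi2 by auto
      moreover have "w \<noteq> z" "dist w z < e"
        using w dx by (auto simp: lo_def hi_def dist_real_def)
      ultimately show "\<exists>x'\<in>Z1. x' \<noteq> z \<and> dist x' z < e" unfolding Z1_def by blast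
    qed
    have U2z: "U2 z = 0"
      by (rule deriv_zero_limpt[OF dU1[rule_format, OF z] lp1]) (use U1z in \<open>auto simp: Z1_def\<close>)
    have b0: "\<beta> = 0" using Kpos[rule_format, OF z] Uz U2z by simp
    obtain B where B: "\<forall>y\<in>{y1..y2}. \<bar>K y\<bar> \<le> B"
      using Kb unfolding bounded_iff by auto
    have B0: "0 \<le> B" using B y12 by (meson abs_ge_zero atLeastAtMost_iff less_imp_le order_trans order_refl)
    define E where "E t = (U t - Ub)\<^sup>2 + (U1 t)\<^sup>2" for t
    define E' where "E' t = 2 * (U t - Ub) * U1 t + 2 * U1 t * U2 t" for t
    have EZ: "\<forall>t\<in>{y1..y2}. E t = 0"
    proof (rule gronwall_zero[of y1 z y2 "1 + B" E E'])
      show "y1 \<le> z" "z \<le> y2" using z by auto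
      show "0 \<le> 1 + B" using B0 by simp
      fix t assume t: "y1 < t" "t < y2"
      then have t': "t \<in> {y1..y2}" by auto
      have d1: "(U has_real_derivative U1 t) (at t)" by (rule within_to_at[OF dU[rule_format, OF t'] t])
      have d2: "(U1 has_real_derivative U2 t) (at t)" by (rule within_to_at[OF dU1[rule_format, OF t'] t])
      show "(E has_real_derivative E' t) (at t)"
        unfolding E_def E'_def by (auto intro!: derivative_eq_intros d1 d2)
      have U2t: "U2 t = - K t * (U t - Ub)" using Kpos t' b0 by (simp add: algebra_simps)
      have Ee: "E' t = 2 * U1 t * (U t - Ub) * (1 - K t)" unfolding E'_def U2t by (simp add: algebra_simps)
      have "\<bar>2 * U1 t * (U t - Ub) * (1 - K t)\<bar> \<le> (1 + B) * ((U t - Ub)\<^sup>2 + (U1 t)\<^sup>2)"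
        by (rule two_pq_bound) (use B t' in auto)
      then show "\<bar>E' t\<bar> \<le> (1 + B) * E t"
        unfolding E_def Ee .
    next
      show "continuous_on {y1..y2} E" unfolding E_def by (intro continuous_intros cU cU1)
      show "E z = 0" using Uz U1z by (simp add: E_def)
      fix t show "0 \<le> E t" by (simp add: E_def)
    qed
    have "\<forall>y\<in>{y1..y2}. U y = Ub"
    proof
      fix y assume y: "y \<in> {y1..y2}"
      have "(U y - Ub)\<^sup>2 + (U1 y)\<^sup>2 = 0" using EZ y by (simp add: E_def)
      then show "U y = Ub" by (simp add: add_nonneg_eq_0_iff)
    qed
    then show False using nc y12 by auto
  qed
  then have "finite ({y1..y2} \<inter> Z)"
    by (intro finite_not_islimpt_in_compact) auto
  moreover have "{y1..y2} \<inter> Z = Z" by (auto simp: Z_def)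
  ultimately show ?thesis by (simp add: Z_def)
qed



lemma borel_measurable_cnj' [measurable]: "cnj \<in> borel_measurable borel"
  by (rule borel_measurable_continuous_onI) (intro continuous_intros)

lemma pointwise_i:
  fixes Om ph c :: complex and k u u2 \<beta> Ub :: real
  assumes k: "0 < k" and kr: "k * (u - Ub) = \<beta> - u2"
    and eq: "Om - of_real (\<beta> - u2) / (of_real u - c) * ph = 0"
  shows "(Om / of_real k - ph) * cnj Om = (c - of_real Ub) * of_real ((\<beta> - u2) / (cmod (of_real u - c))\<^sup>2 * (cmod ph)\<^sup>2)"
proof (cases "of_real u - c = 0")
  case True
  then have "Om = 0" using eq by simp
  then show ?thesis using True by simp
next
  case False
  define d where "d = of_real u - c"
  have d0: "d \<noteq> 0" using False by (simp add: d_def)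
  have cd0: "cnj d \<noteq> 0" using d0 by simp
  have Om: "Om = of_real (\<beta> - u2) / d * ph" using eq by (simp add: d_def)
  have n: "complex_of_real (\<beta> - u2) = of_real k * (of_real u - of_real Ub)"
    using kr by (metis of_real_diff of_real_mult)
  have R: "of_real ((\<beta> - u2) / (cmod d)\<^sup>2 * (cmod ph)\<^sup>2) = complex_of_real (\<beta> - u2) / (d * cnj d) * (ph * cnj ph)"
    by (simp only: of_real_mult of_real_divide complex_norm_square)
  have k0: "complex_of_real k \<noteq> 0" using k by simp
  have n': "complex_of_real (\<beta> - u2) = of_real k * (d + c - of_real Ub)"
    using n by (simp add: d_def)
  have e1: "Om / of_real k - ph = (c - of_real Ub) / d * ph"
    unfolding Om n' using d0 k0 by (simp add: field_simps)
  have e2: "cnj Om = complex_of_real (\<beta> - u2) / cnj d * cnj ph" unfolding Om by simp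
  have "(Om / of_real k - ph) * cnj Om = (c - of_real Ub) * (complex_of_real (\<beta> - u2) / (d * cnj d) * (ph * cnj ph))"
    unfolding e1 e2 using d0 cd0 by (simp add: field_simps)
  then show ?thesis using R by (simp add: d_def)
qed

lemma pointwise_im:
  fixes p1 ph c :: complex and a n u :: real
  assumes d: "of_real u - c \<noteq> 0"
  shows "Im (p1 * cnj p1 + (of_real a * ph - of_real n / (of_real u - c) * ph) * cnj ph)
     = - Im c * (n / (cmod (of_real u - c))\<^sup>2 * (cmod ph)\<^sup>2)"
proof -
  have nz: "(u - Re c)\<^sup>2 + (Im c)\<^sup>2 \<noteq> 0"
    using d by (auto simp: complex_eq_iff)
  have c1: "(cmod (of_real u - c))\<^sup>2 = (u - Re c)\<^sup>2 + (Im c)\<^sup>2" by (simp add: cmod_power2)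
  have c2: "(cmod ph)\<^sup>2 = (Re ph)\<^sup>2 + (Im ph)\<^sup>2" by (simp add: cmod_power2)
  show ?thesis unfolding c1 c2 using nz
    by (simp add: Im_divide field_simps) (simp add: algebra_simps power2_eq_square)
qed

lemma rk_AE:
  assumes "rk_solution U U2 y1 y2 c \<alpha> \<beta> \<phi> \<phi>1 \<phi>2"
  shows "AE y in lborel. y \<in> {y1..y2} \<longrightarrow>
        - \<phi>2 y + of_real (\<alpha>\<^sup>2) * \<phi> y - of_real (\<beta> - U2 y) / (of_real (U y) - c) * \<phi> y = 0"
proof -
  have A: "AE y in lborel. y \<in> {y1<..<y2} \<longrightarrow>
        - \<phi>2 y + of_real (\<alpha>\<^sup>2) * \<phi> y - of_real (\<beta> - U2 y) / (of_real (U y) - c) * \<phi> y = 0"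
    using assms unfolding rk_solution_def by blast
  show ?thesis
    using A AE_lborel_singleton[of y1] AE_lborel_singleton[of y2]
    by eventually_elim auto
qed

lemma C3_facts:
  assumes C3: "C3_on y1 y2 U U1 U2 U3"
  shows "y1 < y2" "continuous_on {y1..y2} U" "continuous_on {y1..y2} U1" "continuous_on {y1..y2} U2"
proof -
  show "y1 < y2" using C3 unfolding C3_on_def by blast
  have dU: "\<forall>y\<in>{y1..y2}. (U has_real_derivative U1 y) (at y within {y1..y2})"
    and dU1: "\<forall>y\<in>{y1..y2}. (U1 has_real_derivative U2 y) (at y within {y1..y2})"
    and dU2: "\<forall>y\<in>{y1..y2}. (U2 has_real_derivative U3 y) (at y within {y1..y2})"
    using C3 unfolding C3_on_def by blast+
  show "continuous_on {y1..y2} U" by (rule rderiv_cont[OF dU])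
  show "continuous_on {y1..y2} U1" by (rule rderiv_cont[OF dU1])
  show "continuous_on {y1..y2} U2" by (rule rderiv_cont[OF dU2])
qed

lemma unstable_I_zero:
  fixes U U1 U2 U3 :: "real \<Rightarrow> real" and \<phi> \<phi>1 \<phi>2 :: "real \<Rightarrow> complex"
  assumes C3: "C3_on y1 y2 U U1 U2 U3" and rk: "rk_solution U U2 y1 y2 c \<alpha> \<beta> \<phi> \<phi>1 \<phi>2"
    and imc: "Im c \<noteq> 0"
  shows "(LINT y:{y1..y2}|lborel. (\<beta> - U2 y) / (cmod (of_real (U y) - c))\<^sup>2 * (cmod (\<phi> y))\<^sup>2) = 0"
proof -
  have y12: "y1 < y2" and cU: "continuous_on {y1..y2} U" and cU2: "continuous_on {y1..y2} U2"
    using C3_facts[OF C3] by blast+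
  have H: "H2_on y1 y2 \<phi> \<phi>1 \<phi>2" and p1: "\<phi> y1 = 0" and p2: "\<phi> y2 = 0"
    using rk unfolding rk_solution_def by blast+
  have Hf: "set_integrable lborel {y1..y2} \<phi>2" "continuous_on {y1..y2} \<phi>1"
    "\<forall>x\<in>{y1..y2}. (\<phi> has_vector_derivative \<phi>1 x) (at x within {y1..y2})"
    "continuous_on {y1..y2} \<phi>" by (rule H2_facts[OF less_imp_le[OF y12] H])+
  have nz: "\<And>y. of_real (U y) - c \<noteq> 0" using imc by (auto simp: complex_eq_iff)
  define g where "g y = of_real (\<alpha>\<^sup>2) * \<phi> y - of_real (\<beta> - U2 y) / (of_real (U y) - c) * \<phi> y" for y
  have cg: "continuous_on {y1..y2} g"
    unfolding g_def using nz by (intro continuous_intros Hf(4) cU cU2) auto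
  have ae: "AE x in lborel. x \<in> {y1..y2} \<longrightarrow> \<phi>2 x = g x"
    using rk_AE[OF rk] by eventually_elim (auto simp: g_def algebra_simps)
  have d2: "\<forall>x\<in>{y1..y2}. (\<phi>1 has_vector_derivative g x) (at x within {y1..y2})"
  proof (rule H2_deriv2[OF less_imp_le[OF y12] _ _ cg ae])
    show "set_borel_measurable lborel {y1..y2} \<phi>2" using H unfolding H2_on_def by blast
    show "\<forall>x\<in>{y1..y2}. \<phi>1 x = \<phi>1 y1 + (LINT t:{y1..x}|lborel. \<phi>2 t)" using H unfolding H2_on_def by blast
  qed
  have E: "((\<lambda>x. \<phi>1 x * cnj (\<phi>1 x) + g x * cnj (\<phi> x)) has_integral 0) {y1..y2}"
    by (rule energy[OF less_imp_le[OF y12] Hf(3) d2 p1 p2])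
  define f where "f y = (\<beta> - U2 y) / (cmod (of_real (U y) - c))\<^sup>2 * (cmod (\<phi> y))\<^sup>2" for y
  from has_integral_linear[OF E bounded_linear_Im]
  have "((\<lambda>x. Im (\<phi>1 x * cnj (\<phi>1 x) + g x * cnj (\<phi> x))) has_integral 0) {y1..y2}" by (simp add: o_def)
  moreover have "\<And>x. Im (\<phi>1 x * cnj (\<phi>1 x) + g x * cnj (\<phi> x)) = (- Im c) *\<^sub>R f x"
    unfolding g_def f_def real_scaleR_def by (rule pointwise_im[OF nz])
  ultimately have "((\<lambda>x. (- Im c) *\<^sub>R f x) has_integral ((- Im c) *\<^sub>R 0)) {y1..y2}" by simp
  then have fi: "(f has_integral 0) {y1..y2}" using has_integral_cmul_iff[of "- Im c" f 0] imc by simp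
  have cf: "continuous_on {y1..y2} f"
    unfolding f_def using nz by (intro continuous_intros Hf(4) cU cU2) auto
  have si: "set_integrable lborel {y1..y2} f"
    unfolding set_integrable_def by (rule borel_integrable_compact[OF compact_Icc cf])
  have "(LINT y:{y1..y2}|lborel. f y) = integral {y1..y2} f" by (rule set_borel_integral_eq_integral[OF si])
  also have "\<dots> = 0" using fi by (rule integral_unique)
  finally show ?thesis by (simp add: f_def)
qed

lemma part_i:
  fixes U U1 U2 U3 K :: "real \<Rightarrow> real" and \<phi> \<phi>1 \<phi>2 :: "real \<Rightarrow> complex"
  assumes C3: "C3_on y1 y2 U U1 U2 U3" and nc: "\<exists>y\<in>{y1..y2}. U y \<noteq> U y1"
    and KK: "Kuo_K U U2 y1 y2 \<beta> Ub K" and al: "0 < \<alpha>"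
    and rk: "rk_solution U U2 y1 y2 c \<alpha> \<beta> \<phi> \<phi>1 \<phi>2"
  shows "L_form y1 y2 K \<alpha> (vorticity \<alpha> \<phi> \<phi>2) =
           (c - of_real Ub) *
           (LINT y:{y1..y2}|lborel. of_real ((\<beta> - U2 y) / (cmod (of_real (U y) - c))\<^sup>2 * (cmod (\<phi> y))\<^sup>2))"
proof -
  define R where "R = restrict_space lborel {y1..y2}"
  have y12: "y1 < y2" and cU: "continuous_on {y1..y2} U" and cU2: "continuous_on {y1..y2} U2"
    using C3_facts[OF C3] by blast+
  have H: "H2_on y1 y2 \<phi> \<phi>1 \<phi>2" and p1: "\<phi> y1 = 0" and p2: "\<phi> y2 = 0"
    using rk unfolding rk_solution_def by blast+
  have cphi: "continuous_on {y1..y2} \<phi>" by (rule H2_facts(4)[OF less_imp_le[OF y12] H])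
  have Kpos: "\<forall>y\<in>{y1..y2}. 0 < K y \<and> K y * (U y - Ub) = \<beta> - U2 y" using KK unfolding Kuo_K_def by blast
  define \<omega> where "\<omega> = vorticity \<alpha> \<phi> \<phi>2"
  have DI: "\<forall>y\<in>{y1..y2}. dirichlet_inv y1 y2 \<alpha> \<omega> y = \<phi> y"
    unfolding \<omega>_def by (rule dirichlet_inv_eq[OF y12 _ H p1 p2]) (use al in simp)
  have mU[measurable]: "U \<in> borel_measurable R" unfolding R_def by (rule cont_meas_restrict[OF cU])
  have mU2[measurable]: "U2 \<in> borel_measurable R" unfolding R_def by (rule cont_meas_restrict[OF cU2])
  have mphi[measurable]: "\<phi> \<in> borel_measurable R" unfolding R_def by (rule cont_meas_restrict[OF cphi])
  have mphi2[measurable]: "\<phi>2 \<in> borel_measurable R"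
    using H unfolding H2_on_def R_def by (simp add: sbm_iff)
  define Z where "Z = {y\<in>{y1..y2}. U y = Ub}"
  have fZ: "finite Z" unfolding Z_def by (rule zeros_finite[OF C3 nc KK])
  have mKf: "(\<lambda>y. (\<beta> - U2 y) / (U y - Ub)) \<in> borel_measurable R" by measurable
  have mK[measurable]: "K \<in> borel_measurable R"
  proof (rule measurable_discrete_difference[OF mKf])
    show "countable Z" using fZ by (rule countable_finite)
    show "\<And>x. x \<in> Z \<Longrightarrow> {x} \<in> sets R"
      unfolding R_def by (subst sets_restrict_space_iff) (auto simp: Z_def)
    show "\<And>x. x \<in> Z \<Longrightarrow> K x \<in> space borel" by simp
    show "\<And>x. x \<in> space R \<Longrightarrow> x \<notin> Z \<Longrightarrow> (\<beta> - U2 x) / (U x - Ub) = K x"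
    proof -
      fix x assume x: "x \<in> space R" "x \<notin> Z"
      then have x': "x \<in> {y1..y2}" "U x \<noteq> Ub" by (auto simp: R_def space_restrict_space Z_def)
      then show "(\<beta> - U2 x) / (U x - Ub) = K x" using Kpos by (auto simp: field_simps)
    qed
  qed
  have mF: "(\<lambda>y. (\<omega> y / of_real (K y) - \<phi> y) * cnj (\<omega> y)) \<in> borel_measurable R"
    unfolding \<omega>_def vorticity_def by measurable
  have mG: "(\<lambda>y. (c - of_real Ub) * of_real ((\<beta> - U2 y) / (cmod (of_real (U y) - c))\<^sup>2 * (cmod (\<phi> y))\<^sup>2)) \<in> borel_measurable R"
    by measurable
  have "L_form y1 y2 K \<alpha> \<omega> = (LINT y:{y1..y2}|lborel. (\<omega> y / of_real (K y) - \<phi> y) * cnj (\<omega> y))"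
    unfolding L_form_def by (rule set_lebesgue_integral_cong) (use DI in auto)
  also have "\<dots> = (LINT y:{y1..y2}|lborel. (c - of_real Ub) * of_real ((\<beta> - U2 y) / (cmod (of_real (U y) - c))\<^sup>2 * (cmod (\<phi> y))\<^sup>2))"
  proof (rule LINT_cong_AE_restrict)
    show "(\<lambda>y. (\<omega> y / of_real (K y) - \<phi> y) * cnj (\<omega> y)) \<in> borel_measurable (restrict_space lborel {y1..y2})"
      using mF by (simp add: R_def)
    show "(\<lambda>y. (c - of_real Ub) * of_real ((\<beta> - U2 y) / (cmod (of_real (U y) - c))\<^sup>2 * (cmod (\<phi> y))\<^sup>2)) \<in> borel_measurable (restrict_space lborel {y1..y2})"
      using mG by (simp add: R_def)
    show "AE x in lborel. x \<in> {y1..y2} \<longrightarrow> (\<omega> x / of_real (K x) - \<phi> x) * cnj (\<omega> x) =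
       (c - of_real Ub) * of_real ((\<beta> - U2 x) / (cmod (of_real (U x) - c))\<^sup>2 * (cmod (\<phi> x))\<^sup>2)"
      using rk_AE[OF rk]
    proof eventually_elim
      case (elim x)
      show ?case
      proof
        assume x: "x \<in> {y1..y2}"
        show "(\<omega> x / of_real (K x) - \<phi> x) * cnj (\<omega> x) =
          (c - of_real Ub) * of_real ((\<beta> - U2 x) / (cmod (of_real (U x) - c))\<^sup>2 * (cmod (\<phi> x))\<^sup>2)"
          by (rule pointwise_i) (use elim x Kpos in \<open>auto simp: \<omega>_def vorticity_def\<close>)
      qed
    qed
  qed simp
  also have "\<dots> = (c - of_real Ub) * (LINT y:{y1..y2}|lborel. of_real ((\<beta> - U2 y) / (cmod (of_real (U y) - c))\<^sup>2 * (cmod (\<phi> y))\<^sup>2))"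
    by (rule set_integral_mult_right)
  finally show ?thesis by (simp add: \<omega>_def)
qed



definition Fint :: "(real \<Rightarrow> real) \<Rightarrow> (real \<Rightarrow> real) \<Rightarrow> real \<Rightarrow> complex \<Rightarrow> (real \<Rightarrow> complex) \<Rightarrow> real \<Rightarrow> real" where
  "Fint U U2 \<beta> c \<psi> y = (\<beta> - U2 y) / (cmod (complex_of_real (U y) - c))\<^sup>2 * (cmod (\<psi> y))\<^sup>2"

lemma real_bound:
  fixes a d p B e P :: real
  assumes "\<bar>a\<bar> \<le> B" "0 < e" "e \<le> d" "0 \<le> p" "p \<le> P"
  shows "\<bar>a / d\<^sup>2 * p\<^sup>2\<bar> \<le> B / e\<^sup>2 * P\<^sup>2"
proof -
  have d: "0 < d" using assms by linarith
  have "\<bar>a / d\<^sup>2 * p\<^sup>2\<bar> = \<bar>a\<bar> / d\<^sup>2 * p\<^sup>2" using d by (simp add: abs_mult)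
  also have "\<dots> \<le> B / e\<^sup>2 * P\<^sup>2"
  proof (rule mult_mono)
    show "\<bar>a\<bar> / d\<^sup>2 \<le> B / e\<^sup>2"
      by (rule frac_le) (use assms in \<open>auto intro: power_mono order_trans[OF abs_ge_zero]\<close>)
    show "p\<^sup>2 \<le> P\<^sup>2" by (rule power_mono) (use assms in auto)
    show "0 \<le> B / e\<^sup>2" using assms by (auto intro: order_trans[OF abs_ge_zero])
    show "0 \<le> p\<^sup>2" by simp
  qed
  finally show ?thesis .
qed

lemma cont_Fint:
  assumes "continuous_on S U" "continuous_on S U2" "continuous_on S \<psi>"
    and "\<forall>y\<in>S. complex_of_real (U y) \<noteq> c"
  shows "continuous_on S (Fint U U2 \<beta> c \<psi>)"
proof -
  have "continuous_on S (\<lambda>y. (\<beta> - U2 y) / (cmod (complex_of_real (U y) - c))\<^sup>2 * (cmod (\<psi> y))\<^sup>2)"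
    using assms(4) by (intro continuous_intros assms(1-3)) auto
  then show ?thesis unfolding Fint_def[abs_def] .
qed

lemma conv_compact:
  fixes U U2 :: "real \<Rightarrow> real" and \<phi> :: "real \<Rightarrow> complex" and \<phi>k :: "nat \<Rightarrow> real \<Rightarrow> complex"
    and ck :: "nat \<Rightarrow> complex"
  assumes S: "compact S" "S \<subseteq> {y1..y2}"
    and cU: "continuous_on {y1..y2} U" and cU2: "continuous_on {y1..y2} U2"
    and cphi: "continuous_on {y1..y2} \<phi>" and cphik: "\<And>k. continuous_on {y1..y2} (\<phi>k k)"
    and avoid: "\<forall>y\<in>S. complex_of_real (U y) \<noteq> c"
    and ck: "ck \<longlonglongrightarrow> c" and ul: "uniform_limit S \<phi>k \<phi> sequentially"
  shows "(\<lambda>k. LINT y:S|lborel. Fint U U2 \<beta> (ck k) (\<phi>k k) y) \<longlonglongrightarrow> (LINT y:S|lborel. Fint U U2 \<beta> c \<phi> y)"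
proof (cases "S = {}")
  case True
  then show ?thesis by (simp add: set_lebesgue_integral_def)
next
  case False
  have cUS: "continuous_on S U" by (rule continuous_on_subset[OF cU S(2)])
  have cU2S: "continuous_on S U2" by (rule continuous_on_subset[OF cU2 S(2)])
  have cphiS: "continuous_on S \<phi>" by (rule continuous_on_subset[OF cphi S(2)])
  have cphikS: "\<And>k. continuous_on S (\<phi>k k)" by (rule continuous_on_subset[OF cphik S(2)])
  have Sb: "S \<in> sets borel" using S(1) by (simp add: compact_imp_closed)
  have "continuous_on S (\<lambda>y. cmod (complex_of_real (U y) - c))" by (intro continuous_intros cUS)
  then obtain y0 where y0: "y0 \<in> S" and y0min: "\<forall>y\<in>S. cmod (complex_of_real (U y0) - c) \<le> cmod (complex_of_real (U y) - c)"
    using continuous_attains_inf[OF S(1) False] by blast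
  define \<delta> where "\<delta> = cmod (complex_of_real (U y0) - c)"
  have \<delta>: "0 < \<delta>" using avoid y0 by (simp add: \<delta>_def)
  have \<delta>le: "\<And>y. y \<in> S \<Longrightarrow> \<delta> \<le> cmod (complex_of_real (U y) - c)" using y0min by (simp add: \<delta>_def)
  have "bounded (\<phi> ` S)" by (rule compact_imp_bounded[OF compact_continuous_image[OF cphiS S(1)]])
  then obtain M where M: "\<forall>y\<in>S. cmod (\<phi> y) \<le> M" unfolding bounded_iff by auto
  have "bounded ((\<lambda>y. \<beta> - U2 y) ` S)"
    by (rule compact_imp_bounded[OF compact_continuous_image[OF _ S(1)]]) (intro continuous_intros cU2S)
  then obtain B where B: "\<forall>y\<in>S. \<bar>\<beta> - U2 y\<bar> \<le> B" unfolding bounded_iff by auto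
  have ev1: "eventually (\<lambda>k. \<forall>y\<in>S. dist (\<phi>k k y) (\<phi> y) < 1) sequentially"
    by (rule uniform_limitD[OF ul]) simp
  have ev2: "eventually (\<lambda>k. dist (ck k) c < \<delta> / 2) sequentially"
    by (rule tendstoD[OF ck]) (use \<delta> in simp)
  obtain N where N: "\<And>k. N \<le> k \<Longrightarrow> (\<forall>y\<in>S. dist (\<phi>k k y) (\<phi> y) < 1) \<and> dist (ck k) c < \<delta> / 2"
    using eventually_conj[OF ev1 ev2] unfolding eventually_sequentially by blast
  have lowk: "\<delta> / 2 \<le> cmod (complex_of_real (U y) - ck k)" if "N \<le> k" "y \<in> S" for k y
  proof -
    have "cmod (complex_of_real (U y) - c) \<le> cmod (complex_of_real (U y) - ck k) + cmod (ck k - c)"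
      by (rule order_trans[OF _ norm_triangle_ineq]) simp
    moreover have "cmod (ck k - c) < \<delta> / 2" using N[OF that(1)] by (simp add: dist_norm)
    moreover have "\<delta> \<le> cmod (complex_of_real (U y) - c)" by (rule \<delta>le[OF that(2)])
    ultimately show ?thesis by linarith
  qed
  have phik_b: "cmod (\<phi>k k y) \<le> M + 1" if "N \<le> k" "y \<in> S" for k y
  proof -
    have "cmod (\<phi>k k y) \<le> cmod (\<phi> y) + cmod (\<phi>k k y - \<phi> y)"
      by (rule order_trans[OF _ norm_triangle_ineq]) simp
    moreover have "cmod (\<phi>k k y - \<phi> y) < 1" using N[OF that(1)] that(2) by (simp add: dist_norm)
    moreover have "cmod (\<phi> y) \<le> M" using M that(2) by blast
    ultimately show ?thesis by linarith
  qed
  define W where "W = B / (\<delta> / 2)\<^sup>2 * (M + 1)\<^sup>2"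
  have avk: "\<forall>y\<in>S. complex_of_real (U y) \<noteq> ck k" if "N \<le> k" for k
  proof
    fix y assume y: "y \<in> S"
    have "0 < cmod (complex_of_real (U y) - ck k)" using lowk[OF that y] \<delta> by linarith
    then show "complex_of_real (U y) \<noteq> ck k" by auto
  qed
  have "(\<lambda>i. LINT y:S|lborel. Fint U U2 \<beta> (ck (i + N)) (\<phi>k (i + N)) y) \<longlonglongrightarrow> (LINT y:S|lborel. Fint U U2 \<beta> c \<phi> y)"
    unfolding set_lebesgue_integral_def
  proof (rule integral_dominated_convergence[where w="\<lambda>y. indicator S y *\<^sub>R W"])
    show "(\<lambda>y. indicator S y *\<^sub>R Fint U U2 \<beta> c \<phi> y) \<in> borel_measurable lborel"
      using borel_measurable_continuous_on_indicator[OF Sb cont_Fint[OF cUS cU2S cphiS avoid]] by simp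
    show "\<And>i. (\<lambda>y. indicator S y *\<^sub>R Fint U U2 \<beta> (ck (i + N)) (\<phi>k (i + N)) y) \<in> borel_measurable lborel"
      using borel_measurable_continuous_on_indicator[OF Sb cont_Fint[OF cUS cU2S cphikS avk]] by simp
    show "integrable lborel (\<lambda>y. indicator S y *\<^sub>R W)"
      by (rule borel_integrable_compact[OF S(1)]) (intro continuous_intros)
    show "AE y in lborel. (\<lambda>i. indicator S y *\<^sub>R Fint U U2 \<beta> (ck (i + N)) (\<phi>k (i + N)) y) \<longlonglongrightarrow> indicator S y *\<^sub>R Fint U U2 \<beta> c \<phi> y"
    proof (rule AE_I2)
      fix y
      show "(\<lambda>i. indicator S y *\<^sub>R Fint U U2 \<beta> (ck (i + N)) (\<phi>k (i + N)) y) \<longlonglongrightarrow> indicator S y *\<^sub>R Fint U U2 \<beta> c \<phi> y"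
      proof (cases "y \<in> S")
        case True
        have t1: "(\<lambda>i. ck (i + N)) \<longlonglongrightarrow> c" by (rule LIMSEQ_ignore_initial_segment[OF ck])
        have t2: "(\<lambda>i. \<phi>k (i + N) y) \<longlonglongrightarrow> \<phi> y"
          by (rule LIMSEQ_ignore_initial_segment[OF tendsto_uniform_limitI[OF ul True]])
        have nz: "(cmod (complex_of_real (U y) - c))\<^sup>2 \<noteq> 0" using avoid True by simp
        have "(\<lambda>i. (\<beta> - U2 y) / (cmod (complex_of_real (U y) - ck (i + N)))\<^sup>2 * (cmod (\<phi>k (i + N) y))\<^sup>2)
           \<longlonglongrightarrow> (\<beta> - U2 y) / (cmod (complex_of_real (U y) - c))\<^sup>2 * (cmod (\<phi> y))\<^sup>2"
          by (intro tendsto_intros t1 t2 nz)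
        then show ?thesis using True by (simp add: Fint_def)
      next
        case False
        then show ?thesis by simp
      qed
    qed
    show "\<And>i. AE y in lborel. norm (indicator S y *\<^sub>R Fint U U2 \<beta> (ck (i + N)) (\<phi>k (i + N)) y) \<le> indicator S y *\<^sub>R W"
    proof (rule AE_I2)
      fix i y
      show "norm (indicator S y *\<^sub>R Fint U U2 \<beta> (ck (i + N)) (\<phi>k (i + N)) y) \<le> indicator S y *\<^sub>R W"
      proof (cases "y \<in> S")
        case True
        have "\<bar>Fint U U2 \<beta> (ck (i + N)) (\<phi>k (i + N)) y\<bar> \<le> W"
          unfolding Fint_def W_def
          by (rule real_bound) (use B True \<delta> lowk[of "i + N" y] phik_b[of "i + N" y] in auto)
        then show ?thesis using True by simp
      next
        case False
        then show ?thesis by simp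
      qed
    qed
  qed
  then show ?thesis by (rule LIMSEQ_offset)
qed



lemma closed_le_set:
  fixes g :: "real \<Rightarrow> real"
  assumes "continuous_on T g" "closed T"
  shows "closed {y\<in>T. g y \<le> a}" "closed {y\<in>T. a \<le> g y}"
proof -
  have "{y\<in>T. g y \<le> a} = T \<inter> g -` {..a}" by auto
  then show "closed {y\<in>T. g y \<le> a}" using continuous_closed_preimage[OF assms closed_atMost] by simp
  have "{y\<in>T. a \<le> g y} = T \<inter> g -` {a..}" by auto
  then show "closed {y\<in>T. a \<le> g y}" using continuous_closed_preimage[OF assms closed_atLeast] by simp
qed

lemma compact_sub_Icc:
  assumes "closed A" "A \<subseteq> {a..b::real}"
  shows "compact A"
  using assms by (meson bounded_closed_interval bounded_subset compact_eq_bounded_closed)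

lemma unstable_facts:
  fixes U U1 U2 U3 :: "real \<Rightarrow> real" and \<psi> :: "real \<Rightarrow> complex"
  assumes C3: "C3_on y1 y2 U U1 U2 U3" and um: "unstable_mode U U2 y1 y2 c' \<alpha>' \<beta> \<psi>"
  shows "continuous_on {y1..y2} \<psi>" "(LINT y:{y1..y2}|lborel. Fint U U2 \<beta> c' \<psi> y) = 0"
    "\<forall>y\<in>{y1..y2}. complex_of_real (U y) \<noteq> c'"
proof -
  obtain \<psi>1 \<psi>2 where rk: "rk_solution U U2 y1 y2 c' \<alpha>' \<beta> \<psi> \<psi>1 \<psi>2" and im: "0 < Im c'"
    using um unfolding unstable_mode_def by blast
  have y12: "y1 < y2" using C3_facts[OF C3] by blast
  have H: "H2_on y1 y2 \<psi> \<psi>1 \<psi>2" using rk unfolding rk_solution_def by blast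
  show "continuous_on {y1..y2} \<psi>" by (rule H2_facts(4)[OF less_imp_le[OF y12] H])
  have "(LINT y:{y1..y2}|lborel. (\<beta> - U2 y) / (cmod (of_real (U y) - c'))\<^sup>2 * (cmod (\<psi> y))\<^sup>2) = 0"
    by (rule unstable_I_zero[OF C3 rk]) (use im in simp)
  then show "(LINT y:{y1..y2}|lborel. Fint U U2 \<beta> c' \<psi> y) = 0" unfolding Fint_def .
  show "\<forall>y\<in>{y1..y2}. complex_of_real (U y) \<noteq> c'"
  proof
    fix y
    show "complex_of_real (U y) \<noteq> c'"
    proof
      assume "complex_of_real (U y) = c'"
      then have "Im (complex_of_real (U y)) = Im c'" by (rule arg_cong)
      then have "Im c' = 0" by simp
      with im show False by simp
    qed
  qed
qed

lemma NL_unfold: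
  assumes NL: "neutral_limiting_mode U U2 y1 y2 c \<alpha> \<beta> \<phi>"
  shows "\<exists>ck \<alpha>k \<phi>k. (\<forall>k. unstable_mode U U2 y1 y2 (ck k) (\<alpha>k k) \<beta> (\<phi>k k)) \<and> ck \<longlonglongrightarrow> c \<and>
    (\<forall>S. compact S \<and> S \<subseteq> {y1..y2} - {y. of_real (U y) = c} \<longrightarrow> uniform_limit S \<phi>k \<phi> sequentially)"
proof -
  obtain ck \<alpha>k \<phi>k where A: "(\<forall>k. unstable_mode U U2 y1 y2 (ck k) (\<alpha>k k) \<beta> (\<phi>k k) \<and>
             (LINT y:{y1..y2}|lborel. (cmod (\<phi>k k y))\<^sup>2) = 1) \<and>
        ck \<longlonglongrightarrow> c \<and> \<alpha>k \<longlonglongrightarrow> \<alpha> \<and>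
        (\<forall>S. compact S \<and> S \<subseteq> {y1..y2} - {y. of_real (U y) = c} \<longrightarrow>
             uniform_limit S \<phi>k \<phi> sequentially)"
    using conjunct1[OF conjunct2[OF conjunct2[OF NL[unfolded neutral_limiting_mode_def]]]]
    by (elim exE) (rule that)
  show ?thesis
  proof (intro exI conjI)
    show "\<forall>k. unstable_mode U U2 y1 y2 (ck k) (\<alpha>k k) \<beta> (\<phi>k k)" using A by simp
    show "ck \<longlonglongrightarrow> c" using A by simp
    show "\<forall>S. compact S \<and> S \<subseteq> {y1..y2} - {y. of_real (U y) = c} \<longrightarrow> uniform_limit S \<phi>k \<phi> sequentially"
      using A by simp
  qed
qed

lemma nonres_part:
  fixes U U1 U2 U3 :: "real \<Rightarrow> real" and \<phi> \<phi>1 \<phi>2 :: "real \<Rightarrow> complex"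
  assumes C3: "C3_on y1 y2 U U1 U2 U3" and rk: "rk_solution U U2 y1 y2 c \<alpha> \<beta> \<phi> \<phi>1 \<phi>2"
    and NL: "neutral_limiting_mode U U2 y1 y2 c \<alpha> \<beta> \<phi>" and NR: "nonresonant_mode U y1 y2 c"
  shows "(LINT y:{y1..y2}|lborel. Fint U U2 \<beta> c \<phi> y) = 0"
proof -
  obtain ck \<alpha>k \<phi>k where um: "\<forall>k. unstable_mode U U2 y1 y2 (ck k) (\<alpha>k k) \<beta> (\<phi>k k)"
    and ck: "ck \<longlonglongrightarrow> c"
    and ul: "\<forall>S. compact S \<and> S \<subseteq> {y1..y2} - {y. of_real (U y) = c} \<longrightarrow> uniform_limit S \<phi>k \<phi> sequentially"
    using NL_unfold[OF NL] by blast
  have y12: "y1 < y2" and cU: "continuous_on {y1..y2} U" and cU2: "continuous_on {y1..y2} U2"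
    using C3_facts[OF C3] by blast+
  have H: "H2_on y1 y2 \<phi> \<phi>1 \<phi>2" using rk unfolding rk_solution_def by blast
  have cphi: "continuous_on {y1..y2} \<phi>" by (rule H2_facts(4)[OF less_imp_le[OF y12] H])
  have avoid: "\<forall>y\<in>{y1..y2}. complex_of_real (U y) \<noteq> c" using NR unfolding nonresonant_mode_def by auto
  have L: "(\<lambda>k. LINT y:{y1..y2}|lborel. Fint U U2 \<beta> (ck k) (\<phi>k k) y) \<longlonglongrightarrow> (LINT y:{y1..y2}|lborel. Fint U U2 \<beta> c \<phi> y)"
  proof (rule conv_compact[OF compact_Icc order_refl cU cU2 cphi _ avoid ck])
    fix k show "continuous_on {y1..y2} (\<phi>k k)" using unstable_facts(1)[OF C3] um by blast
    have "compact {y1..y2} \<and> {y1..y2} \<subseteq> {y1..y2} - {y. of_real (U y) = c}" using avoid by auto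
    then show "uniform_limit {y1..y2} \<phi>k \<phi> sequentially" using ul by blast
  qed
  have "(\<lambda>k. LINT y:{y1..y2}|lborel. Fint U U2 \<beta> (ck k) (\<phi>k k) y) = (\<lambda>k. 0)"
    using unstable_facts(2)[OF C3] um by blast
  with L have "(\<lambda>k. 0::real) \<longlonglongrightarrow> (LINT y:{y1..y2}|lborel. Fint U U2 \<beta> c \<phi> y)" by simp
  from LIMSEQ_unique[OF this tendsto_const] show ?thesis by simp
qed



lemma split_int:
  fixes H :: "real \<Rightarrow> real"
  assumes iH: "set_integrable lborel {a..b} H" and Nb: "N \<in> sets borel" and Nsub: "N \<subseteq> {a..b}"
  shows "(LINT y:{a..b}|lborel. H y) = (LINT y:N|lborel. H y) + (LINT y:{a..b} - N|lborel. H y)"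
proof -
  have "(LINT y:N \<union> ({a..b} - N)|lborel. H y) = (LINT y:N|lborel. H y) + (LINT y:{a..b} - N|lborel. H y)"
  proof (rule set_integral_Un)
    show "N \<inter> ({a..b} - N) = {}" by auto
    show "set_integrable lborel N H" by (rule set_integrable_subset[OF iH]) (use Nb Nsub in auto)
    show "set_integrable lborel ({a..b} - N) H" by (rule set_integrable_subset[OF iH]) (use Nb in auto)
  qed
  moreover have "N \<union> ({a..b} - N) = {a..b}" using Nsub by auto
  ultimately show ?thesis by simp
qed

lemma sing_part:
  fixes U U1 U2 U3 K :: "real \<Rightarrow> real" and \<phi> \<phi>1 \<phi>2 :: "real \<Rightarrow> complex"
  assumes C3: "C3_on y1 y2 U U1 U2 U3" and KK: "Kuo_K U U2 y1 y2 \<beta> Ub K"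
    and rk: "rk_solution U U2 y1 y2 c \<alpha> \<beta> \<phi> \<phi>1 \<phi>2"
    and NL: "neutral_limiting_mode U U2 y1 y2 c \<alpha> \<beta> \<phi>"
  shows "(Re c - Ub) * (LINT y:{y1..y2}|lborel. Fint U U2 \<beta> c \<phi> y) \<le> 0"
proof -
  obtain ck \<alpha>k \<phi>k where um: "\<forall>k. unstable_mode U U2 y1 y2 (ck k) (\<alpha>k k) \<beta> (\<phi>k k)"
    and ck: "ck \<longlonglongrightarrow> c"
    and ul: "\<forall>S. compact S \<and> S \<subseteq> {y1..y2} - {y. of_real (U y) = c} \<longrightarrow> uniform_limit S \<phi>k \<phi> sequentially"
    using NL_unfold[OF NL] by blast
  have imc: "Im c = 0" using NL unfolding neutral_limiting_mode_def by blast
  define cr where "cr = Re c"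
  have cc: "c = complex_of_real cr" using imc by (simp add: complex_eq_iff cr_def)
  define s where "s = cr - Ub"
  define F where "F = Fint U U2 \<beta> c \<phi>"
  define Fk where "Fk k = Fint U U2 \<beta> (ck k) (\<phi>k k)" for k
  have y12: "y1 < y2" and cU: "continuous_on {y1..y2} U" and cU2: "continuous_on {y1..y2} U2"
    using C3_facts[OF C3] by blast+
  have H: "H2_on y1 y2 \<phi> \<phi>1 \<phi>2" using rk unfolding rk_solution_def by blast
  have cphi: "continuous_on {y1..y2} \<phi>" by (rule H2_facts(4)[OF less_imp_le[OF y12] H])
  have Kpos: "\<forall>y\<in>{y1..y2}. 0 < K y \<and> K y * (U y - Ub) = \<beta> - U2 y" using KK unfolding Kuo_K_def by blast
  have cphik: "\<And>k. continuous_on {y1..y2} (\<phi>k k)" using unstable_facts(1)[OF C3] um by blast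
  have Ik: "\<And>k. (LINT y:{y1..y2}|lborel. Fk k y) = 0" unfolding Fk_def using unstable_facts(2)[OF C3] um by blast
  have avk: "\<And>k. \<forall>y\<in>{y1..y2}. complex_of_real (U y) \<noteq> ck k" using unstable_facts(3)[OF C3] um by blast
  have intFk: "\<And>k. set_integrable lborel {y1..y2} (Fk k)"
    unfolding set_integrable_def Fk_def
    by (rule borel_integrable_compact[OF compact_Icc cont_Fint[OF cU cU2 cphik avk]])
  have G0: "\<And>c' \<psi> y. y \<in> {y1..y2} \<Longrightarrow> U y = Ub \<Longrightarrow> Fint U U2 \<beta> c' \<psi> y = 0"
  proof -
    fix c' \<psi> y assume y: "y \<in> {y1..y2}" "U y = Ub"
    then have "\<beta> - U2 y = 0" using Kpos[rule_format, OF y(1)] by simp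
    then show "Fint U U2 \<beta> c' \<psi> y = 0" by (simp add: Fint_def)
  qed
  have Gpos: "\<And>c' \<psi> y. y \<in> {y1..y2} \<Longrightarrow> 0 \<le> s * (U y - Ub) \<Longrightarrow> 0 \<le> s * Fint U U2 \<beta> c' \<psi> y"
  proof -
    fix c' \<psi> y assume y: "y \<in> {y1..y2}" "0 \<le> s * (U y - Ub)"
    have e: "K y * (U y - Ub) = \<beta> - U2 y" using Kpos y(1) by blast
    have "s * (\<beta> - U2 y) = K y * (s * (U y - Ub))" unfolding e[symmetric] by (simp add: algebra_simps)
    also have "\<dots> \<ge> 0"
    proof -
      have kp: "0 < K y" using Kpos y(1) by blast
      show ?thesis by (rule mult_nonneg_nonneg) (use kp y(2) in auto)
    qed
    finally have "0 \<le> s * (\<beta> - U2 y)" .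
    then have "0 \<le> s * (\<beta> - U2 y) / (cmod (complex_of_real (U y) - c'))\<^sup>2 * (cmod (\<psi> y))\<^sup>2" by simp
    then show "0 \<le> s * Fint U U2 \<beta> c' \<psi> y" by (simp add: Fint_def mult.assoc)
  qed
  have F0: "\<And>y. U y = cr \<Longrightarrow> F y = 0" by (simp add: F_def Fint_def cc)
  show ?thesis
  proof (cases "s = 0")
    case True
    then show ?thesis by (simp add: s_def cr_def)
  next
    case s0: False
    show ?thesis
    proof (cases "set_integrable lborel {y1..y2} F")
      case False
      then have "(LINT y:{y1..y2}|lborel. F y) = 0"
        unfolding set_lebesgue_integral_def set_integrable_def by (rule not_integrable_integral_eq)
      then show ?thesis by (simp add: F_def)
    next
      case intF: True
      define g where "g y = s * (U y - Ub)" for y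
      have cg: "continuous_on {y1..y2} g" unfolding g_def by (intro continuous_intros cU)
      have cg1: "continuous_on {y1..y2} (\<lambda>y. \<bar>U y - cr\<bar>)" by (intro continuous_intros cU)
      define Ncl where "Ncl = {y\<in>{y1..y2}. g y \<le> 0}"
      define Pp where "Pp = {y1..y2} - Ncl"
      define A where "A n = {y\<in>{y1..y2}. 1 / (real n + 1) \<le> \<bar>U y - cr\<bar>} \<inter> {y\<in>{y1..y2}. 0 \<le> g y}" for n
      have clN: "closed Ncl" unfolding Ncl_def by (rule closed_le_set(1)[OF cg closed_atLeastAtMost])
      have clA: "closed (A n)" for n
        unfolding A_def by (intro closed_Int closed_le_set(2)[OF cg closed_atLeastAtMost] closed_le_set(2)[OF cg1 closed_atLeastAtMost])
      have Nsub: "Ncl \<subseteq> {y1..y2}" by (auto simp: Ncl_def)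
      have Asub: "A n \<subseteq> {y1..y2}" for n by (auto simp: A_def)
      have cpN: "compact Ncl" by (rule compact_sub_Icc[OF clN Nsub])
      have cpA: "compact (A n)" for n by (rule compact_sub_Icc[OF clA Asub])
      have bN: "Ncl \<in> sets borel" using clN by simp
      have bA: "A n \<in> sets borel" for n using clA by simp
      have bP: "Pp \<in> sets borel" unfolding Pp_def using bN by simp
      have Psub: "Pp \<subseteq> {y1..y2}" by (auto simp: Pp_def)
      have avN: "\<forall>y\<in>Ncl. complex_of_real (U y) \<noteq> c"
      proof
        fix y assume y: "y \<in> Ncl"
        show "complex_of_real (U y) \<noteq> c"
        proof
          assume "complex_of_real (U y) = c"
          then have "U y = cr" by (simp add: cc)
          then have "g y = s * s" by (simp add: g_def s_def)
          moreover have "g y \<le> 0" using y by (simp add: Ncl_def)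
          moreover have "0 < s * s" using s0 by (simp flip: power2_eq_square)
          ultimately show False by linarith
        qed
      qed
      have avA: "\<forall>y\<in>A n. complex_of_real (U y) \<noteq> c" for n
      proof
        fix y assume y: "y \<in> A n"
        have "0 < 1 / (real n + 1)" by simp
        then have "U y \<noteq> cr" using y by (auto simp: A_def)
        then show "complex_of_real (U y) \<noteq> c" by (simp add: cc)
      qed
      have ulN: "uniform_limit Ncl \<phi>k \<phi> sequentially"
      proof -
        have "compact Ncl \<and> Ncl \<subseteq> {y1..y2} - {y. of_real (U y) = c}" using cpN Nsub avN by auto
        then show ?thesis using ul by blast
      qed
      have ulA: "uniform_limit (A n) \<phi>k \<phi> sequentially" for n
      proof -
        have "compact (A n) \<and> A n \<subseteq> {y1..y2} - {y. of_real (U y) = c}" using cpA[of n] Asub[of n] avA[of n] by auto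
        then show ?thesis using ul by blast
      qed
      have mono: "s * (LINT y:A n|lborel. Fint U U2 \<beta> c' \<psi> y) \<le> s * (LINT y:Pp|lborel. Fint U U2 \<beta> c' \<psi> y)"
        if iH: "set_integrable lborel {y1..y2} (Fint U U2 \<beta> c' \<psi>)" for n c' \<psi>
      proof -
        define f where "f = Fint U U2 \<beta> c' \<psi>"
        have iA: "set_integrable lborel (A n) f" unfolding f_def by (rule set_integrable_subset[OF iH]) (use bA Asub in auto)
        have iP: "set_integrable lborel Pp f" unfolding f_def by (rule set_integrable_subset[OF iH]) (use bP Psub in auto)
        have "s * (LINT y:A n|lborel. f y) = (LINT y:A n|lborel. s * f y)" by simp
        also have "\<dots> \<le> (LINT y:Pp|lborel. s * f y)"
          unfolding set_lebesgue_integral_def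
        proof (rule integral_mono)
          show "integrable lborel (\<lambda>y. indicator (A n) y *\<^sub>R (s * f y))"
            using set_integrable_mult_right[OF iA, of s] unfolding set_integrable_def .
          show "integrable lborel (\<lambda>y. indicator Pp y *\<^sub>R (s * f y))"
            using set_integrable_mult_right[OF iP, of s] unfolding set_integrable_def .
          fix y
          show "indicator (A n) y *\<^sub>R (s * f y) \<le> indicator Pp y *\<^sub>R (s * f y)"
          proof (cases "y \<in> A n")
            case yA: True
            then have y: "y \<in> {y1..y2}" "0 \<le> g y" by (auto simp: A_def)
            show ?thesis
            proof (cases "y \<in> Pp")
              case True then show ?thesis using yA by simp
            next
              case False
              then have "g y \<le> 0" using y by (auto simp: Pp_def Ncl_def)
              then have "g y = 0" using y by simp
              then have "U y = Ub" using s0 by (simp add: g_def)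
              then have "f y = 0" unfolding f_def by (rule G0[OF y(1)])
              then show ?thesis by simp
            qed
          next
            case False
            show ?thesis
            proof (cases "y \<in> Pp")
              case True
              then have y: "y \<in> {y1..y2}" "0 < g y" by (auto simp: Pp_def Ncl_def)
              have "0 \<le> s * f y" unfolding f_def by (rule Gpos[OF y(1)]) (use y in \<open>simp add: g_def\<close>)
              then show ?thesis using True False by simp
            next
              case False2: False
              then show ?thesis using False by simp
            qed
          qed
        qed
        also have "\<dots> = s * (LINT y:Pp|lborel. f y)" by simp
        finally show ?thesis by (simp add: f_def)
      qed
      have step3: "s * (LINT y:A n|lborel. F y) \<le> - (s * (LINT y:Ncl|lborel. F y))" for n
      proof (rule LIMSEQ_le)
        show "(\<lambda>k. s * (LINT y:A n|lborel. Fk k y)) \<longlonglongrightarrow> s * (LINT y:A n|lborel. F y)"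
          unfolding Fk_def F_def
          by (intro tendsto_mult_left conv_compact[OF cpA Asub cU cU2 cphi cphik avA ck ulA])
        show "(\<lambda>k. - (s * (LINT y:Ncl|lborel. Fk k y))) \<longlonglongrightarrow> - (s * (LINT y:Ncl|lborel. F y))"
          unfolding Fk_def F_def
          by (intro tendsto_minus tendsto_mult_left conv_compact[OF cpN Nsub cU cU2 cphi cphik avN ck ulN])
        show "\<exists>N. \<forall>k\<ge>N. s * (LINT y:A n|lborel. Fk k y) \<le> - (s * (LINT y:Ncl|lborel. Fk k y))"
        proof (intro exI allI impI)
          fix k :: nat
          have sp: "(LINT y:{y1..y2}|lborel. Fk k y) = (LINT y:Ncl|lborel. Fk k y) + (LINT y:Pp|lborel. Fk k y)"
            unfolding Pp_def by (rule split_int[OF intFk bN Nsub])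
          have "s * (LINT y:A n|lborel. Fk k y) \<le> s * (LINT y:Pp|lborel. Fk k y)"
            unfolding Fk_def by (rule mono) (use intFk in \<open>simp add: Fk_def\<close>)
          also have "\<dots> = - (s * (LINT y:Ncl|lborel. Fk k y))"
          proof -
            have "(LINT y:Pp|lborel. Fk k y) = - (LINT y:Ncl|lborel. Fk k y)" using sp Ik[of k] by linarith
            then show ?thesis by simp
          qed
          finally show "s * (LINT y:A n|lborel. Fk k y) \<le> - (s * (LINT y:Ncl|lborel. Fk k y))" .
        qed
      qed
      have step4: "(\<lambda>n. LINT y:A n|lborel. F y) \<longlonglongrightarrow> (LINT y:Pp|lborel. F y)"
        unfolding set_lebesgue_integral_def
      proof (rule integral_dominated_convergence[where w="\<lambda>y. indicator {y1..y2} y *\<^sub>R \<bar>F y\<bar>"])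
        have "set_integrable lborel Pp F" by (rule set_integrable_subset[OF intF]) (use bP Psub in auto)
        then show "(\<lambda>y. indicator Pp y *\<^sub>R F y) \<in> borel_measurable lborel"
          unfolding set_integrable_def by (rule borel_measurable_integrable)
        fix n
        have "set_integrable lborel (A n) F" by (rule set_integrable_subset[OF intF]) (use bA Asub in auto)
        then show "(\<lambda>y. indicator (A n) y *\<^sub>R F y) \<in> borel_measurable lborel"
          unfolding set_integrable_def by (rule borel_measurable_integrable)
      next
        show "integrable lborel (\<lambda>y. indicator {y1..y2} y *\<^sub>R \<bar>F y\<bar>)"
          using set_integrable_abs[OF intF] unfolding set_integrable_def .
      next
        fix n
        show "AE y in lborel. norm (indicator (A n) y *\<^sub>R F y) \<le> indicator {y1..y2} y *\<^sub>R \<bar>F y\<bar>"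
        proof (rule AE_I2)
          fix y
          show "norm (indicator (A n) y *\<^sub>R F y) \<le> indicator {y1..y2} y *\<^sub>R \<bar>F y\<bar>"
            using Asub[of n] by (auto simp: indicator_def)
        qed
      next
        show "AE y in lborel. (\<lambda>n. indicator (A n) y *\<^sub>R F y) \<longlonglongrightarrow> indicator Pp y *\<^sub>R F y"
        proof (rule AE_I2)
          fix y
          show "(\<lambda>n. indicator (A n) y *\<^sub>R F y) \<longlonglongrightarrow> indicator Pp y *\<^sub>R F y"
          proof (cases "y \<in> {y1..y2} \<and> U y \<noteq> cr \<and> U y \<noteq> Ub")
            case False
            then consider "y \<notin> {y1..y2}" | "U y = cr" | "y \<in> {y1..y2}" "U y = Ub" by blast
            then have "F y = 0 \<or> (\<forall>n. y \<notin> A n \<and> y \<notin> Pp)"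
            proof cases
              case 1 then show ?thesis using Asub Psub by blast
            next
              case 2 then show ?thesis using F0 by blast
            next
              case 3 then show ?thesis unfolding F_def using G0 by blast
            qed
            then show ?thesis by auto
          next
            case True
            then have y: "y \<in> {y1..y2}" "0 < \<bar>U y - cr\<bar>" "g y \<noteq> 0" using s0 by (auto simp: g_def)
            obtain N :: nat where N: "0 < N" "inverse (real N) < \<bar>U y - cr\<bar>"
              using ex_inverse_of_nat_less[OF y(2)] by blast
            have "eventually (\<lambda>n. indicator (A n) y *\<^sub>R F y = indicator Pp y *\<^sub>R F y) sequentially"
            proof (rule eventually_sequentiallyI[of N])
              fix n assume n: "N \<le> n"
              have "1 / (real n + 1) \<le> inverse (real N)"
                using N(1) n by (simp add: divide_simps)
              then have l: "1 / (real n + 1) \<le> \<bar>U y - cr\<bar>" using N(2) by linarith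
              have "y \<in> A n \<longleftrightarrow> y \<in> Pp" using y l by (auto simp: A_def Pp_def Ncl_def)
              then show "indicator (A n) y *\<^sub>R F y = indicator Pp y *\<^sub>R F y" by (simp add: indicator_def)
            qed
            then show ?thesis by (rule tendsto_eventually)
          qed
        qed
      qed
      have step5: "s * (LINT y:Pp|lborel. F y) \<le> - (s * (LINT y:Ncl|lborel. F y))"
      proof (rule LIMSEQ_le)
        show "(\<lambda>n. s * (LINT y:A n|lborel. F y)) \<longlonglongrightarrow> s * (LINT y:Pp|lborel. F y)"
          by (intro tendsto_mult_left step4)
        show "(\<lambda>n. - (s * (LINT y:Ncl|lborel. F y))) \<longlonglongrightarrow> - (s * (LINT y:Ncl|lborel. F y))"
          by (rule tendsto_const)
        show "\<exists>N. \<forall>n\<ge>N. s * (LINT y:A n|lborel. F y) \<le> - (s * (LINT y:Ncl|lborel. F y))"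
          using step3 by blast
      qed
      have "(LINT y:{y1..y2}|lborel. F y) = (LINT y:Ncl|lborel. F y) + (LINT y:Pp|lborel. F y)"
        unfolding Pp_def by (rule split_int[OF intF bN Nsub])
      then have "s * (LINT y:{y1..y2}|lborel. F y) \<le> 0" using step5 by (simp add: algebra_simps)
      then show ?thesis by (simp add: s_def cr_def F_def)
    qed
  qed
qed


theorem lemma3p2:
  fixes U U1 U2 U3 K :: "real \<Rightarrow> real" and y1 y2 \<beta> Ub \<alpha> :: real and c :: complex
    and \<phi> \<phi>1 \<phi>2 :: "real \<Rightarrow> complex"
  assumes "C3_on y1 y2 U U1 U2 U3"
    and "\<exists>y\<in>{y1..y2}. U y \<noteq> U y1"
    and "classKplus U U2 y1 y2"
    and "(INF y\<in>{y1..y2}. U2 y) < \<beta>" and "\<beta> < (SUP y\<in>{y1..y2}. U2 y)"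
    and "Kuo_K U U2 y1 y2 \<beta> Ub K"
    and "0 < \<alpha>"
    and "rk_solution U U2 y1 y2 c \<alpha> \<beta> \<phi> \<phi>1 \<phi>2"
  shows "L_form y1 y2 K \<alpha> (vorticity \<alpha> \<phi> \<phi>2) =
           (c - of_real Ub) *
           (LINT y:{y1..y2}|lborel. of_real ((\<beta> - U2 y) / (cmod (of_real (U y) - c))\<^sup>2 * (cmod (\<phi> y))\<^sup>2))
    \<and> (0 < Im c \<longrightarrow> L_form y1 y2 K \<alpha> (vorticity \<alpha> \<phi> \<phi>2) = 0)
    \<and> (neutral_limiting_mode U U2 y1 y2 c \<alpha> \<beta> \<phi> \<and> (regular_mode c Ub \<or> nonresonant_mode U y1 y2 c)
         \<longrightarrow> L_form y1 y2 K \<alpha> (vorticity \<alpha> \<phi> \<phi>2) = 0)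
    \<and> (neutral_limiting_mode U U2 y1 y2 c \<alpha> \<beta> \<phi> \<and> singular_mode U U1 y1 y2 c
         \<longrightarrow> L_form y1 y2 K \<alpha> (vorticity \<alpha> \<phi> \<phi>2) \<in> \<real> \<and> Re (L_form y1 y2 K \<alpha> (vorticity \<alpha> \<phi> \<phi>2)) \<le> 0)"
proof -
  have PI: "L_form y1 y2 K \<alpha> (vorticity \<alpha> \<phi> \<phi>2) =
           (c - of_real Ub) *
           (LINT y:{y1..y2}|lborel. of_real ((\<beta> - U2 y) / (cmod (of_real (U y) - c))\<^sup>2 * (cmod (\<phi> y))\<^sup>2))"
    by (rule part_i[OF assms(1,2,6,7,8)])
  define I where "I = (LINT y:{y1..y2}|lborel. Fint U U2 \<beta> c \<phi> y)"
  have LI: "(LINT y:{y1..y2}|lborel. complex_of_real ((\<beta> - U2 y) / (cmod (of_real (U y) - c))\<^sup>2 * (cmod (\<phi> y))\<^sup>2)) = of_real I"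
    unfolding I_def Fint_def by (rule set_integral_complex_of_real)
  have L: "L_form y1 y2 K \<alpha> (vorticity \<alpha> \<phi> \<phi>2) = (c - of_real Ub) * of_real I"
    using PI LI by simp
  show ?thesis
  proof (intro conjI impI)
    show "L_form y1 y2 K \<alpha> (vorticity \<alpha> \<phi> \<phi>2) =
           (c - of_real Ub) *
           (LINT y:{y1..y2}|lborel. of_real ((\<beta> - U2 y) / (cmod (of_real (U y) - c))\<^sup>2 * (cmod (\<phi> y))\<^sup>2))"
      by (rule PI)
  next
    assume im: "0 < Im c"
    have "I = 0" unfolding I_def Fint_def
      by (rule unstable_I_zero[OF assms(1,8)]) (use im in simp)
    then show "L_form y1 y2 K \<alpha> (vorticity \<alpha> \<phi> \<phi>2) = 0" using L by simp
  next
    assume h: "neutral_limiting_mode U U2 y1 y2 c \<alpha> \<beta> \<phi> \<and> (regular_mode c Ub \<or> nonresonant_mode U y1 y2 c)"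
    then have NL: "neutral_limiting_mode U U2 y1 y2 c \<alpha> \<beta> \<phi>" by blast
    from h have "regular_mode c Ub \<or> nonresonant_mode U y1 y2 c" by blast
    then show "L_form y1 y2 K \<alpha> (vorticity \<alpha> \<phi> \<phi>2) = 0"
    proof
      assume "regular_mode c Ub"
      then have "c = of_real Ub" by (simp add: regular_mode_def)
      then show ?thesis using L by simp
    next
      assume NR: "nonresonant_mode U y1 y2 c"
      have "I = 0" unfolding I_def by (rule nonres_part[OF assms(1,8) NL NR])
      then show ?thesis using L by simp
    qed
  next
    assume h: "neutral_limiting_mode U U2 y1 y2 c \<alpha> \<beta> \<phi> \<and> singular_mode U U1 y1 y2 c"
    then have NL: "neutral_limiting_mode U U2 y1 y2 c \<alpha> \<beta> \<phi>" by blast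
    have imc: "Im c = 0" using NL unfolding neutral_limiting_mode_def by blast
    then have cc: "c = complex_of_real (Re c)" by (simp add: complex_eq_iff)
    have L2: "L_form y1 y2 K \<alpha> (vorticity \<alpha> \<phi> \<phi>2) = complex_of_real ((Re c - Ub) * I)"
      using L by (subst (asm) cc) simp
    have "(Re c - Ub) * I \<le> 0" unfolding I_def by (rule sing_part[OF assms(1,6,8) NL])
    then show "Re (L_form y1 y2 K \<alpha> (vorticity \<alpha> \<phi> \<phi>2)) \<le> 0"
      unfolding L2 by simp
  next
    assume h: "neutral_limiting_mode U U2 y1 y2 c \<alpha> \<beta> \<phi> \<and> singular_mode U U1 y1 y2 c"
    then have NL: "neutral_limiting_mode U U2 y1 y2 c \<alpha> \<beta> \<phi>" by blast
    have imc: "Im c = 0" using NL unfolding neutral_limiting_mode_def by blast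
    then have cc: "c = complex_of_real (Re c)" by (simp add: complex_eq_iff)
    have L2: "L_form y1 y2 K \<alpha> (vorticity \<alpha> \<phi> \<phi>2) = complex_of_real ((Re c - Ub) * I)"
      using L by (subst (asm) cc) simp
    then show "L_form y1 y2 K \<alpha> (vorticity \<alpha> \<phi> \<phi>2) \<in> \<real>" by simp
  qed
qed

end
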